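(* Let $\mathbf{E},\mathbf{F}$ be finite-dimensional Euclidean spaces, $\mathcal{K}\subset\mathbf{E}$ a proper cone, $\mathcal{A}:\mathbf{E}\to\mathbf{F}$ linear, $b\in\mathbf{F}$, $c\in\mathbf{E}$, and consider the conic program $\min\{\langle c,x\rangle:\mathcal{A}x=b,\ x\in\mathcal{K}\}$ with solution set $\mathcal{X}_\star$ and optimal value $p_\star$, and its dual $\max\{\langle b,y\rangle: c-\mathcal{A}^*y\in\mathcal{K}^*\}$. Suppose strong duality holds and dual strict complementarity holds for a solution pair $(x_\star,y_\star)$ with $s_\star=c-\mathcal{A}^*y_\star$, and suppose one of the following five cases pertains, with the corresponding function $f$: (1) $s_\star=0$: $f=0$; (2) $s_\star\in\mathrm{int}(\mathcal{K}^* )$: $f=c_\star\,\epsilon(x_+)$ with $c_\star=\sup_{x\in\mathcal{K}\setminus\{0\}}1/\langle s_\star,x/\|x\|_2\rangle$; (3) $\mathcal{K}=\mathbb{R}^n_+$, $s_\star\in\partial\mathcal{K}^*\setminus\{0\}$: $f=\epsilon(x_+)/s_{\min>0}$, $s_{\min>0}$ the smallest nonzero entry of $s_\star$; (4) $\mathcal{K}=\mathrm{SOC}^n=\{(x_{1:n},x_{n+1}):\|x_{1:n}\|_2\le x_{n+1}\}$, $s_\star\in\partial\mathcal{K}^*\setminus\{0\}$: $f=\sqrt{2\sqrt2\,\|x\|_2\,\epsilon(x_+)/\|s_\star\|_2}$; (5) $\mathcal{K}=\mathbb{S}^n_+$, $S_\star\in\partial\mathcal{K}^*\setminus\{0\}$: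 $f=\frac{\epsilon(X_+)}{T}+\sqrt{2\frac{\epsilon(X_+)}{T}\|X\|_{\mathrm{op}}}$, $T$ the smallest nonzero eigenvalue of $S_\star$. Then there exist constants $\gamma,\gamma'\ge0$ such that for all $x\in\mathbf{E}$, $$\mathrm{dist}(x,\mathcal{X}_\star)\le\kappa f+\gamma\|\mathcal{A}(x)-b\|_2+\kappa\|P_{\mathcal{V}_{s_\star}^\perp}(x_-)\|_2+\gamma'\|P_{\mathcal{V}_{s_\star}}(x_-)\|_2,$$ where $\kappa=1+\gamma\sigma_{\max}(\mathcal{A})$. In particular, when $\mathcal{X}_\star$ is a singleton, one may take $\gamma'=0$ and $\gamma=1/\sigma_{\min}(\mathcal{A}_{\mathcal{V}_{s_\star}})$. Furthermore $\epsilon(x_+)=\epsilon_{\mathrm{opt}}(x)+\langle y_\star,b-\mathcal{A}(x)\rangle-\langle s_\star,x_-\rangle$.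
   Context: $\mathcal{K}^*$ is the dual cone. Strong duality: primal and dual solution sets nonempty, $\mathcal{X}_\star$ compact, and a solution pair $(x_\star,y_\star)$ with $\langle s_\star,x_\star\rangle=0$, $s_\star=c-\mathcal{A}^*y_\star$. Complementary face $\mathcal{F}_{s_\star}=\{x\in\mathcal{K}:\langle x,s_\star\rangle=0\}$; complementary space $\mathcal{V}_{s_\star}=\mathrm{aff}(\mathcal{F}_{s_\star})$ (a linear subspace). Dual strict complementarity: $x_\star\in\mathrm{relint}(\mathcal{F}_{s_\star})$. Notation: $x_+=P_{\mathcal{K}}(x)$ (Euclidean projection), $x_-=x-x_+$, $\epsilon(x)=\langle s_\star,x\rangle$, $\epsilon_{\mathrm{opt}}(x)=\langle c,x\rangle-p_\star$. $\sigma_{\max}(\mathcal{A})=\max_{\|x\|_2=1}\|\mathcal{A}x\|_2$; $\sigma_{\min}(\mathcal{A}_{\mathcal{V}_{s_\star}})=\min_{x\in\mathcal{V}_{s_\star},\|x\|_2=1}\|\mathcal{A}x\|_2$. $\mathbb{R}^n$ uses the dot product, $\mathbb{S}^n$ the trace inner product; $\|\cdot\|_{\mathrm{op}}$ is the operator norm. $\mathrm{dist}(x,C)=\inf_{z\in C}\|x-z\|_2$. *)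

theory Defs
  imports "HOL-Analysis.Analysis"
begin

definition dual_cone :: "'a::real_inner set \<Rightarrow> 'a set" where
  "dual_cone K = {s. \<forall>x\<in>K. 0 \<le> s \<bullet> x}"

definition proper_cone :: "'a::real_normed_vector set \<Rightarrow> bool" where
  "proper_cone K \<longleftrightarrow> cone K \<and> convex K \<and> closed K \<and> interior K \<noteq> {}
      \<and> (\<forall>x. x \<in> K \<and> - x \<in> K \<longrightarrow> x = 0)"

definition primal_feasible :: "('e::euclidean_space \<Rightarrow> 'f::euclidean_space) \<Rightarrow> 'f \<Rightarrow> 'e set \<Rightarrow> 'e set" where
  "primal_feasible A b K = {x. A x = b \<and> x \<in> K}"

definition primal_value :: "('e::euclidean_space \<Rightarrow> 'f::euclidean_space) \<Rightarrow> 'f \<Rightarrow> 'e \<Rightarrow> 'e set \<Rightarrow> real" where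
  "primal_value A b c K = Inf ((\<lambda>x. c \<bullet> x) ` primal_feasible A b K)"

definition primal_solutions :: "('e::euclidean_space \<Rightarrow> 'f::euclidean_space) \<Rightarrow> 'f \<Rightarrow> 'e \<Rightarrow> 'e set \<Rightarrow> 'e set" where
  "primal_solutions A b c K =
     {x \<in> primal_feasible A b K. \<forall>z \<in> primal_feasible A b K. c \<bullet> x \<le> c \<bullet> z}"

definition dual_feasible :: "('e::euclidean_space \<Rightarrow> 'f::euclidean_space) \<Rightarrow> 'e \<Rightarrow> 'e set \<Rightarrow> 'f set" where
  "dual_feasible A c K = {y. c - adjoint A y \<in> dual_cone K}"

definition dual_solutions :: "('e::euclidean_space \<Rightarrow> 'f::euclidean_space) \<Rightarrow> 'f \<Rightarrow> 'e \<Rightarrow> 'e set \<Rightarrow> 'f set" where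
  "dual_solutions A b c K =
     {y \<in> dual_feasible A c K. \<forall>z \<in> dual_feasible A c K. b \<bullet> z \<le> b \<bullet> y}"

definition compl_face :: "'a::real_inner set \<Rightarrow> 'a \<Rightarrow> 'a set" where
  "compl_face K s = {x \<in> K. x \<bullet> s = 0}"

definition compl_space :: "'a::real_inner set \<Rightarrow> 'a \<Rightarrow> 'a set" where
  "compl_space K s = affine hull (compl_face K s)"

definition pos_part :: "'a::euclidean_space set \<Rightarrow> 'a \<Rightarrow> 'a" where
  "pos_part K x = closest_point K x"

definition neg_part :: "'a::euclidean_space set \<Rightarrow> 'a \<Rightarrow> 'a" where
  "neg_part K x = x - closest_point K x"

text \<open>Convention: for V = {0} the minimum over the empty unit sphere is +infinity;
  we encode this by the value 0, so that 1 / sigma_min = 0 (= 1/infinity) in HOL.\<close>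
definition sigma_max :: "('e::euclidean_space \<Rightarrow> 'f::euclidean_space) \<Rightarrow> real" where
  "sigma_max A = Sup ((\<lambda>x. norm (A x)) ` {x. norm x = 1})"

definition sigma_min_on :: "('e::euclidean_space \<Rightarrow> 'f::euclidean_space) \<Rightarrow> 'e set \<Rightarrow> real" where
  "sigma_min_on A V = (if V = {0} then 0 else Inf ((\<lambda>x. norm (A x)) ` {x \<in> V. norm x = 1}))"

definition isometric_onto :: "('e::real_inner \<Rightarrow> 'g::real_inner) \<Rightarrow> 'g set \<Rightarrow> bool" where
  "isometric_onto T S \<longleftrightarrow> linear T \<and> (\<forall>x y. T x \<bullet> T y = x \<bullet> y) \<and> range T = S"

definition case_zero :: "'e::euclidean_space set \<Rightarrow> 'e \<Rightarrow> ('e \<Rightarrow> real) \<Rightarrow> bool" where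
  "case_zero K s f \<longleftrightarrow> s = 0 \<and> f = (\<lambda>x. 0)"

definition interior_const :: "'e::euclidean_space set \<Rightarrow> 'e \<Rightarrow> real" where
  "interior_const K s = Sup ((\<lambda>x. 1 / (s \<bullet> (x /\<^sub>R norm x))) ` (K - {0}))"

definition case_interior :: "'e::euclidean_space set \<Rightarrow> 'e \<Rightarrow> ('e \<Rightarrow> real) \<Rightarrow> bool" where
  "case_interior K s f \<longleftrightarrow> s \<in> interior (dual_cone K)
     \<and> f = (\<lambda>x. interior_const K s * (s \<bullet> pos_part K x))"

text \<open>Case (3): K = R^n_+ (E identified isometrically with R^n via T),
  s in boundary of K^* minus 0, f = eps(x_+) / (smallest nonzero entry of s).\<close>
definition case_orthant :: "'e::euclidean_space set \<Rightarrow> 'e \<Rightarrow> ('e \<Rightarrow> real) \<Rightarrow> ('e \<Rightarrow> real^'n) \<Rightarrow> bool" where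
  "case_orthant K s f T \<longleftrightarrow> isometric_onto T UNIV
     \<and> K = T -` {v. \<forall>i. 0 \<le> v $ i}
     \<and> s \<in> frontier (dual_cone K) - {0}
     \<and> f = (\<lambda>x. (s \<bullet> pos_part K x) / Inf {T s $ i | i. T s $ i \<noteq> 0})"

definition case_soc :: "'e::euclidean_space set \<Rightarrow> 'e \<Rightarrow> ('e \<Rightarrow> real) \<Rightarrow> ('e \<Rightarrow> (real^'n::finite) \<times> real) \<Rightarrow> bool" where
  "case_soc K s f T \<longleftrightarrow> isometric_onto T UNIV
     \<and> K = T -` {(u, t). norm u \<le> t}
     \<and> s \<in> frontier (dual_cone K) - {0}
     \<and> f = (\<lambda>x. sqrt (2 * sqrt 2 * norm x * (s \<bullet> pos_part K x) / norm s))"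

text \<open>Case (5): K = S^n_+, E identified isometrically (trace inner product) with the
  symmetric n x n matrices.\<close>
definition psd :: "real^'n^'n \<Rightarrow> bool" where
  "psd M \<longleftrightarrow> transpose M = M \<and> (\<forall>v. 0 \<le> v \<bullet> (M *v v))"

definition min_nonzero_eig :: "real^'n^'n \<Rightarrow> real" where
  "min_nonzero_eig M = Inf {l. l \<noteq> 0 \<and> (\<exists>v. v \<noteq> 0 \<and> M *v v = l *\<^sub>R v)}"

definition case_psd :: "'e::euclidean_space set \<Rightarrow> 'e \<Rightarrow> ('e \<Rightarrow> real) \<Rightarrow> ('e \<Rightarrow> real^'n^'n) \<Rightarrow> bool" where
  "case_psd K s f T \<longleftrightarrow> isometric_onto T {M. transpose M = M}
     \<and> K = T -` {M. psd M}
     \<and> s \<in> frontier (dual_cone K) - {0}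
     \<and> f = (\<lambda>x. (s \<bullet> pos_part K x) / min_nonzero_eig (T s)
              + sqrt (2 * ((s \<bullet> pos_part K x) / min_nonzero_eig (T s)) * onorm (\<lambda>v. T x *v v)))"

end

theory Submission
  imports Defs
begin

lemma proj_subspace:
  fixes U :: "'a::euclidean_space set"
  assumes U: "subspace U"
  shows "closest_point U v \<in> U \<and> (\<forall>u\<in>U. (v - closest_point U v) \<bullet> u = 0)"
proof -
  obtain y z where y: "y \<in> span U" and z: "\<And>w. w \<in> span U \<Longrightarrow> orthogonal z w" and v: "v = y + z"
    using orthogonal_subspace_decomp_exists by blast
  have spU: "span U = U" using U by (simp add: span_eq_iff)
  have yU: "y \<in> U" using y spU by simp
  have orth: "\<forall>u\<in>U. (v - y) \<bullet> u = 0" using z spU v by (auto simp: orthogonal_def)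
  have "\<forall>w\<in>U. dist v y \<le> dist v w"
  proof
    fix w assume w: "w \<in> U"
    have "y - w \<in> U" using U yU w by (simp add: subspace_diff)
    then have o: "(v - y) \<bullet> (y - w) = 0" using orth by blast
    have "(dist v w)^2 = (norm ((v - y) + (y - w)))^2" by (simp add: dist_norm)
    also have "\<dots> = (norm (v - y))^2 + (norm (y - w))^2"
      using o norm_add_Pythagorean[of "v - y" "y - w"] by (simp add: orthogonal_def)
    finally have "(dist v y)^2 \<le> (dist v w)^2" by (simp add: dist_norm)
    then show "dist v y \<le> dist v w" by (simp add: power2_le_iff_abs_le)
  qed
  moreover have "convex U" using U by (simp add: subspace_imp_convex)
  moreover have "closed U" using U by (simp add: closed_subspace)
  ultimately have "y = closest_point U v" using yU closest_point_unique by blast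
  then show ?thesis using yU orth by simp
qed

lemma proj_perp:
  fixes U :: "'a::euclidean_space set"
  assumes U: "subspace U"
  shows "closest_point (orthogonal_comp U) v = v - closest_point U v"
proof -
  let ?p = "closest_point U v"
  have p: "?p \<in> U" "\<forall>u\<in>U. (v - ?p) \<bullet> u = 0" using proj_subspace[OF U] by auto
  have mem: "v - ?p \<in> orthogonal_comp U"
    using p by (auto simp: orthogonal_comp_def orthogonal_def inner_commute)
  have "\<forall>w\<in>orthogonal_comp U. dist v (v - ?p) \<le> dist v w"
  proof
    fix w assume w: "w \<in> orthogonal_comp U"
    have o: "?p \<bullet> (v - ?p - w) = 0"
    proof -
      have "?p \<bullet> (v - ?p) = 0" using p by (simp add: inner_commute)
      moreover have "?p \<bullet> w = 0" using w p(1) by (auto simp: orthogonal_comp_def orthogonal_def)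
      ultimately show ?thesis by (simp add: inner_diff_right)
    qed
    have "(dist v w)^2 = (norm (?p + (v - ?p - w)))^2" by (simp add: dist_norm)
    also have "\<dots> = (norm ?p)^2 + (norm (v - ?p - w))^2"
      using o norm_add_Pythagorean[of "?p" "v - ?p - w"] by (simp add: orthogonal_def)
    finally have "(dist v (v - ?p))^2 \<le> (dist v w)^2" by (simp add: dist_norm)
    then show "dist v (v - ?p) \<le> dist v w" by (simp add: power2_le_iff_abs_le)
  qed
  moreover have "convex (orthogonal_comp U)" by (simp add: subspace_imp_convex subspace_orthogonal_comp)
  moreover have "closed (orthogonal_comp U)" by (simp add: closed_subspace subspace_orthogonal_comp)
  ultimately show ?thesis using mem closest_point_unique by metis
qed

lemma quad_zero:
  fixes a b :: real
  assumes "\<forall>t. 0 \<le> a * t + b * t^2"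
  shows "a = 0"
proof (rule ccontr)
  assume a: "a \<noteq> 0"
  then have a2: "a * a > 0" by (metis not_real_square_gt_zero)
  show False
  proof (cases "b \<le> 0")
    case True
    have "0 \<le> a * (-a) + b * (-a)^2" using assms by blast
    moreover have "b * (-a)^2 \<le> 0" using True by (simp add: mult_nonpos_nonneg)
    ultimately show False using a2 by simp
  next
    case False
    then have bp: "b > 0" by simp
    have "0 \<le> a * (-a/(2*b)) + b * (-a/(2*b))^2" using assms by blast
    also have "a * (-a/(2*b)) + b * (-a/(2*b))^2 = - (a*a) / (4*b)"
      using bp by (simp add: power2_eq_square field_simps)
    finally have "a * a / (4 * b) \<le> 0" by simp
    moreover have "a * a / (4 * b) > 0" using a2 bp by (intro divide_pos_pos) auto
    ultimately show False by simp
  qed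
qed

lemma discr_le:
  fixes a b c :: real
  assumes "\<forall>t. 0 \<le> a + 2 * b * t + c * t^2"
  shows "b^2 \<le> a * c"
proof (cases "c = 0")
  case True
  have "\<forall>t. 0 \<le> (2*b) * t + 0 * t^2 + a" using assms True by (simp add: algebra_simps)
  have "b = 0"
  proof (rule ccontr)
    assume "b \<noteq> 0"
    have "0 \<le> a + 2 * b * (- (\<bar>a\<bar> + 1) / (2 * b)) + c * (- (\<bar>a\<bar> + 1) / (2 * b))^2" using assms by blast
    then have "0 \<le> a + 2 * b * (- (\<bar>a\<bar> + 1) / (2 * b))" using True by simp
    moreover have "2 * b * (- (\<bar>a\<bar> + 1) / (2 * b)) = - (\<bar>a\<bar> + 1)" using \<open>b \<noteq> 0\<close> by simp
    ultimately show False by simp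
  qed
  then show ?thesis using True by simp
next
  case False
  have a0: "0 \<le> a" using assms[rule_format, of 0] by simp
  have c0: "c \<ge> 0"
  proof (rule ccontr)
    assume "\<not> c \<ge> 0"
    then have cn: "c < 0" by simp
    define t where "t = (\<bar>a\<bar> + 2*\<bar>b\<bar> + 1) / (- c) + 1"
    have "(\<bar>a\<bar> + 2*\<bar>b\<bar> + 1) / (- c) \<ge> 0" using cn by (intro divide_nonneg_pos) auto
    then have t1: "t \<ge> 1" by (simp add: t_def)
    have "0 \<le> a + 2 * b * t + c * t^2" using assms by auto
    also have "\<dots> \<le> \<bar>a\<bar> * t + 2 * \<bar>b\<bar> * t + c * t * t"
    proof -
      have "a \<le> \<bar>a\<bar> * t" using t1 by (smt (verit) mult_le_cancel_left1)
      moreover have "2 * b * t \<le> 2 * \<bar>b\<bar> * t" using t1 by (simp add: mult_right_mono)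
      ultimately show ?thesis by (simp add: power2_eq_square mult.assoc)
    qed
    also have "\<dots> = t * (\<bar>a\<bar> + 2 * \<bar>b\<bar> + c * t)" by (simp add: algebra_simps)
    also have "\<bar>a\<bar> + 2 * \<bar>b\<bar> + c * t < 0"
    proof -
      have "c * t = - (\<bar>a\<bar> + 2*\<bar>b\<bar> + 1) + c" using cn by (simp add: t_def field_simps)
      then show ?thesis using cn by simp
    qed
    then have "t * (\<bar>a\<bar> + 2 * \<bar>b\<bar> + c * t) < 0" using t1 by (simp add: mult_pos_neg)
    finally show False by simp
  qed
  then have cp: "c > 0" using False by simp
  have "0 \<le> a + 2 * b * (- b / c) + c * (- b / c)^2" using assms by blast
  also have "\<dots> = a - b^2 / c" using cp by (simp add: power2_eq_square field_simps)
  finally show ?thesis using cp by (simp add: field_simps)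
qed

lemma inj_bound:
  fixes A :: "'a::euclidean_space \<Rightarrow> 'b::euclidean_space"
  assumes S: "closed S" and sc: "\<forall>x\<in>S. \<forall>c>0. c *\<^sub>R x \<in> S" and lin: "linear A"
    and inj: "\<forall>x\<in>S. A x = 0 \<longrightarrow> x = 0"
  shows "\<exists>m>0. \<forall>x\<in>S. m * norm x \<le> norm (A x)"
proof -
  let ?C = "S \<inter> sphere 0 1"
  have cC: "compact ?C" using S by (intro closed_Int_compact) auto
  have scale: "x /\<^sub>R norm x \<in> ?C" if "x \<in> S" "x \<noteq> 0" for x
    using sc that by auto
  show ?thesis
  proof (cases "?C = {}")
    case True
    have "x = 0" if "x \<in> S" for x using scale[OF that] True by blast
    then show ?thesis by (intro exI[of _ 1]) force
  next
    case False
    have bl: "bounded_linear A" using lin by (simp add: linear_conv_bounded_linear)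
    have "continuous_on ?C (\<lambda>x. norm (A x))"
      by (intro continuous_on_norm linear_continuous_on bl)
    then obtain x0 where x0: "x0 \<in> ?C" and mn: "\<forall>y\<in>?C. norm (A x0) \<le> norm (A y)"
      using continuous_attains_inf[OF cC False] by blast
    have "x0 \<noteq> 0" using x0 by auto
    then have "A x0 \<noteq> 0" using inj x0 by auto
    then have m: "norm (A x0) > 0" by simp
    have "norm (A x0) * norm x \<le> norm (A x)" if "x \<in> S" for x
    proof (cases "x = 0")
      case True then show ?thesis by simp
    next
      case False
      have "norm (A x0) \<le> norm (A (x /\<^sub>R norm x))" using mn scale[OF that False] by blast
      also have "\<dots> = norm (A x) / norm x" using lin False by (simp add: linear_scale divide_inverse_commute)
      finally show ?thesis using False by (simp add: field_simps)
    qed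
    then show ?thesis using m by blast
  qed
qed

lemma sigma_max_bound:
  fixes A :: "'a::euclidean_space \<Rightarrow> 'b::euclidean_space"
  assumes lin: "linear A"
  shows "norm (A v) \<le> sigma_max A * norm v" "0 \<le> sigma_max A"
proof -
  obtain B where B: "\<forall>x. norm (A x) \<le> B * norm x" using linear_bounded[OF lin] by blast
  have bdd: "bdd_above ((\<lambda>x. norm (A x)) ` {x. norm x = 1})"
    using B by (intro bdd_aboveI[of _ B]) (metis (mono_tags, lifting) imageE mem_Collect_eq mult.right_neutral)
  have up: "norm (A u) \<le> sigma_max A" if "norm u = 1" for u
    unfolding sigma_max_def using bdd that by (intro cSUP_upper) auto
  obtain e :: 'a where "e \<in> Basis" using nonempty_Basis by blast
  then have "norm e = 1" by simp
  then show "0 \<le> sigma_max A" using up[of e] norm_ge_zero[of "A e"] by linarith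
  show "norm (A v) \<le> sigma_max A * norm v"
  proof (cases "v = 0")
    case True then show ?thesis using lin by (simp add: linear_0)
  next
    case False
    have "norm (A (v /\<^sub>R norm v)) \<le> sigma_max A" using up False by simp
    also have "norm (A (v /\<^sub>R norm v)) = norm (A v) / norm v"
      using lin False by (simp add: linear_scale divide_inverse_commute)
    finally show ?thesis using False by (simp add: field_simps)
  qed
qed

lemma moreau:
  fixes K :: "'a::euclidean_space set"
  assumes cl: "closed K" and cv: "convex K" and cn: "cone K" and ne: "K \<noteq> {}"
  shows "closest_point K x \<in> K"
    and "(x - closest_point K x) \<bullet> closest_point K x = 0"
    and "\<forall>k\<in>K. (x - closest_point K x) \<bullet> k \<le> 0"
    and "norm (closest_point K x) \<le> norm x"
proof -
  let ?p = "closest_point K x"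
  show pK: "?p \<in> K" using closest_point_in_set[OF cl ne] .
  have z: "0 \<in> K" using ne cn unfolding cone_def by (metis all_not_in_conv scale_zero_left order_refl)
  have "(x - ?p) \<bullet> (0 - ?p) \<le> 0" using closest_point_dot[OF cv cl z] .
  moreover have "2 *\<^sub>R ?p \<in> K" using cn pK unfolding cone_def by simp
  then have "(x - ?p) \<bullet> (2 *\<^sub>R ?p - ?p) \<le> 0" using closest_point_dot[OF cv cl] by blast
  ultimately show o: "(x - ?p) \<bullet> ?p = 0" by (simp add: inner_diff_right algebra_simps)
  show "\<forall>k\<in>K. (x - ?p) \<bullet> k \<le> 0"
  proof
    fix k assume "k \<in> K"
    then have "(x - ?p) \<bullet> (k - ?p) \<le> 0" using closest_point_dot[OF cv cl] by blast
    then show "(x - ?p) \<bullet> k \<le> 0" using o by (simp add: inner_diff_right)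
  qed
  have "dist (closest_point K x) (closest_point K 0) \<le> dist x 0"
    using closest_point_lipschitz[OF cv cl ne] .
  moreover have "closest_point K 0 = 0" using z by (rule closest_point_self)
  ultimately show "norm ?p \<le> norm x" by simp
qed

lemma infdist_closest:
  fixes F :: "'a::euclidean_space set"
  assumes "closed F" "F \<noteq> {}"
  shows "dist y (closest_point F y) = infdist y F"
proof (rule antisym)
  show "infdist y F \<le> dist y (closest_point F y)"
    using closest_point_in_set[OF assms] by (rule infdist_le)
  show "dist y (closest_point F y) \<le> infdist y F"
    unfolding infdist_notempty[OF assms(2)]
    using closest_point_le[OF assms(1)] assms(2) by (intro cINF_greatest) auto
qed

locale conic_setup =
  fixes K :: "'e::euclidean_space set" and A :: "'e \<Rightarrow> 'f::euclidean_space"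
    and b :: 'f and c :: 'e and xs :: 'e and ys :: 'f and s :: 'e
  assumes proper: "proper_cone K"
    and lin: "linear A"
    and xs_sol: "xs \<in> primal_solutions A b c K"
    and ys_sol: "ys \<in> dual_solutions A b c K"
    and compact_sol: "compact (primal_solutions A b c K)"
    and s_def: "s = c - adjoint A ys"
    and compl: "s \<bullet> xs = 0"
    and strict_compl: "xs \<in> rel_interior (compl_face K s)"
begin

abbreviation "FF \<equiv> compl_face K s"
abbreviation "VV \<equiv> compl_space K s"
abbreviation "XX \<equiv> primal_solutions A b c K"

lemma K_props: "cone K" "convex K" "closed K" "K \<noteq> {}" "0 \<in> K"
proof -
  show c: "cone K" "convex K" "closed K" using proper by (auto simp: proper_cone_def)
  show ne: "K \<noteq> {}" using proper by (auto simp: proper_cone_def dest: interior_subset[THEN subsetD])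
  then show "0 \<in> K" using c(1) unfolding cone_def by (metis all_not_in_conv scale_zero_left order_refl)
qed

lemma s_dual: "s \<in> dual_cone K"
  using ys_sol s_def by (simp add: dual_solutions_def dual_feasible_def)

lemma s_nonneg: "x \<in> K \<Longrightarrow> 0 \<le> s \<bullet> x"
  using s_dual by (simp add: dual_cone_def)

lemma cx: "c \<bullet> x = s \<bullet> x + ys \<bullet> A x"
proof -
  have "c = s + adjoint A ys" using s_def by simp
  then have "c \<bullet> x = s \<bullet> x + adjoint A ys \<bullet> x" by (simp add: inner_add_left)
  also have "adjoint A ys \<bullet> x = x \<bullet> adjoint A ys" by (rule inner_commute)
  also have "x \<bullet> adjoint A ys = A x \<bullet> ys" using adjoint_works[OF lin] .
  finally show ?thesis by (simp add: inner_commute)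
qed

lemma xs_props: "xs \<in> K" "A xs = b"
  using xs_sol by (auto simp: primal_solutions_def primal_feasible_def)

lemma XX_eq: "XX = {x \<in> FF. A x = b}"
proof
  show "XX \<subseteq> {x \<in> FF. A x = b}"
  proof
    fix x assume x: "x \<in> XX"
    then have xK: "x \<in> K" and Ax: "A x = b" by (auto simp: primal_solutions_def primal_feasible_def)
    have "c \<bullet> x \<le> c \<bullet> xs" using x xs_sol by (auto simp: primal_solutions_def)
    then have "s \<bullet> x \<le> 0" using cx[of x] cx[of xs] compl Ax xs_props by simp
    then have "x \<bullet> s = 0" using s_nonneg[OF xK] by (simp add: inner_commute)
    then show "x \<in> {x \<in> FF. A x = b}" using xK Ax by (simp add: compl_face_def)
  qed
next
  show "{x \<in> FF. A x = b} \<subseteq> XX"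
  proof
    fix x assume "x \<in> {x \<in> FF. A x = b}"
    then have xK: "x \<in> K" and Ax: "A x = b" and xs0: "x \<bullet> s = 0" by (auto simp: compl_face_def)
    have "c \<bullet> x \<le> c \<bullet> z" if "z \<in> primal_feasible A b K" for z
      using that cx[of x] cx[of z] xs0 s_nonneg[of z] Ax
      by (auto simp: primal_feasible_def inner_commute)
    then show "x \<in> XX" using xK Ax by (auto simp: primal_solutions_def primal_feasible_def)
  qed
qed

lemma pval: "primal_value A b c K = ys \<bullet> b"
proof -
  have "Inf ((\<lambda>x. c \<bullet> x) ` primal_feasible A b K) = c \<bullet> xs"
    using xs_sol by (intro cInf_eq_minimum) (auto simp: primal_solutions_def)
  then show ?thesis using cx[of xs] compl xs_props by (simp add: primal_value_def)
qed

lemma third: "s \<bullet> pos_part K x = (c \<bullet> x - primal_value A b c K) + ys \<bullet> (b - A x) - s \<bullet> neg_part K x"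
  using cx[of x] by (simp add: pval pos_part_def neg_part_def inner_diff_right)

lemma FF_props: "closed FF" "convex FF" "cone FF" "0 \<in> FF" "xs \<in> FF" "FF \<subseteq> K"
proof -
  have eq: "FF = K \<inter> {x. x \<bullet> s = 0}" by (auto simp: compl_face_def)
  have "closed {x. x \<bullet> s = 0}" by (intro closed_Collect_eq continuous_intros)
  then show "closed FF" using K_props eq by auto
  have "convex {x::'e. x \<bullet> s = 0}" using convex_hyperplane[of s 0] by (simp add: inner_commute)
  then show "convex FF" using K_props eq by (simp add: convex_Int)
  show "cone FF" using K_props(1) unfolding eq cone_def by (auto simp: inner_commute)
  show "0 \<in> FF" using K_props by (simp add: compl_face_def)
  show "xs \<in> FF" using xs_props compl by (simp add: compl_face_def inner_commute)
  show "FF \<subseteq> K" by (auto simp: compl_face_def)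
qed

lemma VV_span: "VV = span FF" and VV_sub: "subspace VV" and FF_VV: "FF \<subseteq> VV"
proof -
  show "VV = span FF" unfolding compl_space_def
    using FF_props(4) hull_subset[of FF affine] by (intro affine_hull_span_0) auto
  then show "subspace VV" by simp
  show "FF \<subseteq> VV" unfolding compl_space_def by (rule hull_subset)
qed

lemma ball_FF: obtains e where "e > 0" "\<And>z. z \<in> VV \<Longrightarrow> norm (z - xs) < e \<Longrightarrow> z \<in> FF"
proof -
  obtain e where e: "e > 0" "ball xs e \<inter> affine hull FF \<subseteq> FF"
    using strict_compl by (auto simp: mem_rel_interior_ball)
  show ?thesis
    using e by (intro that[of e]) (auto simp: compl_space_def dist_norm norm_minus_commute)
qed

lemma FF_add: "x \<in> FF \<Longrightarrow> y \<in> FF \<Longrightarrow> x + y \<in> FF"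
  using FF_props(2,3) convex_cone by blast

lemma FF_kerA: "p \<in> FF \<Longrightarrow> A p = 0 \<Longrightarrow> p = 0"
proof (rule ccontr)
  assume p: "p \<in> FF" "A p = 0" "p \<noteq> 0"
  obtain B where B: "\<forall>x\<in>XX. norm x \<le> B" using compact_imp_bounded[OF compact_sol] by (auto simp: bounded_iff)
  define t where "t = (\<bar>B\<bar> + norm xs + 1) / norm p"
  have tp: "t \<ge> 0" using p by (simp add: t_def)
  have "t *\<^sub>R p \<in> FF" using FF_props(3) p tp unfolding cone_def by blast
  then have "xs + t *\<^sub>R p \<in> FF" using FF_add FF_props(5) by blast
  moreover have "A (xs + t *\<^sub>R p) = b" using lin p xs_props by (simp add: linear_add linear_scale)
  ultimately have "xs + t *\<^sub>R p \<in> XX" using XX_eq by blast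
  then have "norm (xs + t *\<^sub>R p) \<le> B" using B by blast
  moreover have "norm (t *\<^sub>R p) = \<bar>B\<bar> + norm xs + 1" using p tp by (simp add: t_def)
  moreover have "norm (t *\<^sub>R p) \<le> norm (xs + t *\<^sub>R p) + norm xs"
    using norm_triangle_ineq4[of "xs + t *\<^sub>R p" xs] by simp
  ultimately show False by linarith
qed

end

lemma subspace_ker: "linear A \<Longrightarrow> subspace {x. A x = 0}"
  by (auto simp: subspace_def linear_add linear_scale linear_0)

context conic_setup begin

lemma hoffman: "\<exists>C\<ge>0. \<forall>p\<in>FF. infdist p XX \<le> C * norm (A p - b)"
proof -
  obtain m where m: "m > 0" "\<forall>x\<in>FF. m * norm x \<le> norm (A x)"
  proof -
    have "\<forall>x\<in>FF. \<forall>c>0. c *\<^sub>R x \<in> FF" using FF_props(3) unfolding cone_def by auto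
    then show ?thesis using inj_bound[OF FF_props(1) _ lin] FF_kerA that by blast
  qed
  define K0 where "K0 = VV \<inter> {x. A x = 0}"
  have K0: "subspace K0" unfolding K0_def
    using VV_sub subspace_ker[OF lin] by (intro subspace_inter) auto
  define W where "W = VV \<inter> orthogonal_comp K0"
  have Wsub: "subspace W" unfolding W_def using VV_sub subspace_orthogonal_comp by (intro subspace_inter) auto
  obtain m1 where m1: "m1 > 0" "\<forall>x\<in>W. m1 * norm x \<le> norm (A x)"
  proof -
    have "\<forall>x\<in>W. \<forall>c>0. c *\<^sub>R x \<in> W" using Wsub by (simp add: subspace_scale)
    moreover have "\<forall>x\<in>W. A x = 0 \<longrightarrow> x = 0"
    proof (intro ballI impI)
      fix x assume "x \<in> W" "A x = 0"
      then have "x \<in> K0" "x \<in> orthogonal_comp K0" by (auto simp: W_def K0_def)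
      then have "x \<bullet> x = 0" by (auto simp: orthogonal_comp_def orthogonal_def)
      then show "x = 0" by simp
    qed
    ultimately show ?thesis using inj_bound[OF closed_subspace[OF Wsub] _ lin] that by blast
  qed
  obtain e where e: "e > 0" "\<And>z. z \<in> VV \<Longrightarrow> norm (z - xs) < e \<Longrightarrow> z \<in> FF" using ball_FF by blast
  define e' where "e' = e / 2"
  have e': "e' > 0" "e' < e" using e by (auto simp: e'_def)
  define C1 where "C1 = (1 / (m1 * e')) * ((1 + norm b) / m + norm xs) + 1 / m1"
  define C2 where "C2 = (1 + norm b) / m + norm xs"
  have C1: "C1 \<ge> 0" using m m1 e' by (simp add: C1_def)
  have C2: "C2 \<ge> 0" using m by (simp add: C2_def)
  have main: "infdist p XX \<le> max C1 C2 * norm (A p - b)" if pF: "p \<in> FF" for p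
  proof -
    define r where "r = norm (A p - b)"
    have r0: "r \<ge> 0" by (simp add: r_def)
    have np: "norm p \<le> (r + norm b) / m"
    proof -
      have "m * norm p \<le> norm (A p)" using m pF by blast
      also have "norm (A p) \<le> r + norm b" unfolding r_def using norm_triangle_ineq2[of "A p" b] by simp
      finally show ?thesis using m by (simp add: field_simps)
    qed
    have xsX: "xs \<in> XX" using xs_sol .
    have bound2: "infdist p XX \<le> (r + norm b) / m + norm xs"
    proof -
      have "infdist p XX \<le> dist p xs" using infdist_le[OF xsX] .
      also have "\<dots> \<le> norm p + norm xs" by (simp add: dist_norm norm_triangle_ineq4)
      finally show ?thesis using np by linarith
    qed
    define d where "d = p - xs"
    have dV: "d \<in> VV" unfolding d_def using pF FF_props(5) FF_VV VV_sub by (auto intro: subspace_diff)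
    define k where "k = closest_point K0 d"
    have k: "k \<in> K0" "\<forall>u\<in>K0. (d - k) \<bullet> u = 0" using proj_subspace[OF K0] by (auto simp: k_def)
    define w where "w = d - k"
    have wV: "w \<in> VV" using dV k(1) VV_sub unfolding w_def K0_def by (auto intro: subspace_diff)
    have wW: "w \<in> W" using wV k(2) unfolding W_def w_def
      by (auto simp: orthogonal_comp_def orthogonal_def inner_commute)
    have Aw: "A w = A p - b" using k(1) lin xs_props unfolding w_def d_def K0_def by (simp add: linear_diff)
    have nw: "norm w \<le> r / m1"
    proof -
      have "m1 * norm w \<le> norm (A w)" using m1 wW by blast
      then show ?thesis using m1 Aw by (simp add: r_def field_simps)
    qed
    define t where "t = norm w / (e' + norm w)"
    have den: "e' + norm w > 0" using e' by (simp add: add_pos_nonneg)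
    have t01: "0 \<le> t" "t \<le> 1" "t \<le> norm w / e'"
    proof -
      show "0 \<le> t" using den e' by (simp add: t_def)
      show "t \<le> 1" using den e' by (simp add: t_def divide_le_eq)
      show "t \<le> norm w / e'" unfolding t_def using e' by (intro frac_le) auto
    qed
    define z where "z = xs - (e' / norm w) *\<^sub>R w"
    have zF: "z \<in> FF"
    proof (cases "w = 0")
      case True then show ?thesis using FF_props(5) by (simp add: z_def)
    next
      case False
      have "z \<in> VV" unfolding z_def using FF_props(5) FF_VV VV_sub wV
        by (auto intro: subspace_diff subspace_scale)
      moreover have "norm (z - xs) < e" using False e' by (simp add: z_def)
      ultimately show ?thesis using e(2) by blast
    qed
    define q where "q = (1 - t) *\<^sub>R (p - w) + t *\<^sub>R xs"
    have qF: "q \<in> FF"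
    proof (cases "w = 0")
      case True then show ?thesis using pF by (simp add: q_def t_def)
    next
      case False
      have "q = (1 - t) *\<^sub>R p + t *\<^sub>R z"
      proof -
        have "t * (e' / norm w) = e' / (e' + norm w)" using False by (simp add: t_def)
        also have "\<dots> = 1 - t" using den by (simp add: t_def field_simps)
        finally have "t * (e' / norm w) = 1 - t" .
        have "q = (1 - t) *\<^sub>R p - (1 - t) *\<^sub>R w + t *\<^sub>R xs" by (simp add: q_def algebra_simps)
        also have "\<dots> = (1 - t) *\<^sub>R p - (t * (e' / norm w)) *\<^sub>R w + t *\<^sub>R xs"
          using \<open>t * (e' / norm w) = 1 - t\<close> by simp
        also have "\<dots> = (1 - t) *\<^sub>R p + t *\<^sub>R z" by (simp add: z_def algebra_simps)
        finally show ?thesis .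
      qed
      then show ?thesis using FF_props(2) pF zF t01 by (simp add: convex_def)
    qed
    have Aq: "A q = b"
    proof -
      have "A q = (1 - t) *\<^sub>R (A p - A w) + t *\<^sub>R A xs"
        unfolding q_def using lin by (simp add: linear_add linear_scale linear_diff)
      then show ?thesis using Aw xs_props by (simp add: algebra_simps)
    qed
    have qX: "q \<in> XX" using qF Aq XX_eq by blast
    have bound1: "infdist p XX \<le> (norm w / e') * (norm p + norm xs) + norm w"
    proof -
      have "infdist p XX \<le> norm (p - q)" using infdist_le[OF qX] by (simp add: dist_norm)
      also have "p - q = t *\<^sub>R p - t *\<^sub>R xs + (1 - t) *\<^sub>R w" by (simp add: q_def algebra_simps)
      also have "norm \<dots> \<le> t * norm p + t * norm xs + (1 - t) * norm w"
        using t01 norm_triangle_ineq[of "t *\<^sub>R p - t *\<^sub>R xs" "(1 - t) *\<^sub>R w"]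
          norm_triangle_ineq4[of "t *\<^sub>R p" "t *\<^sub>R xs"] by simp
      also have "\<dots> \<le> (norm w / e') * (norm p + norm xs) + norm w"
      proof -
        have "t * (norm p + norm xs) \<le> (norm w / e') * (norm p + norm xs)"
          using t01 by (intro mult_right_mono) auto
        moreover have "(1 - t) * norm w \<le> norm w" using t01 by (simp add: mult_left_le_one_le)
        ultimately show ?thesis by (simp add: algebra_simps)
      qed
      finally show ?thesis .
    qed
    show ?thesis
    proof (cases "r \<le> 1")
      case True
      have "(norm w / e') * (norm p + norm xs) + norm w \<le> (r / (m1 * e')) * ((1 + norm b) / m + norm xs) + r / m1"
      proof -
        have a: "norm w / e' \<le> r / (m1 * e')" using nw e' m1 by (simp add: field_simps)
        have "norm p + norm xs \<le> (1 + norm b) / m + norm xs"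
          using np True m by (smt (verit) divide_right_mono)
        then have "(norm w / e') * (norm p + norm xs) \<le> (r / (m1 * e')) * ((1 + norm b) / m + norm xs)"
          using a e' m1 r0 by (intro mult_mono) auto
        then show ?thesis using nw by simp
      qed
      also have "\<dots> = C1 * r" by (simp add: C1_def algebra_simps)
      also have "\<dots> \<le> max C1 C2 * r" using r0 by (simp add: mult_right_mono)
      finally show ?thesis using bound1 by (simp add: r_def)
    next
      case False
      have "(r + norm b) / m + norm xs \<le> r * ((1 + norm b) / m) + r * norm xs"
      proof -
        have "(r + norm b) / m \<le> r * ((1 + norm b) / m)"
          using False m by (simp add: field_simps) (simp add: mult_le_cancel_right1)
        moreover have "norm xs \<le> r * norm xs" using False by (simp add: mult_le_cancel_right1)
        ultimately show ?thesis by simp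
      qed
      also have "\<dots> = C2 * r" by (simp add: C2_def algebra_simps)
      also have "\<dots> \<le> max C1 C2 * r" using r0 by (simp add: mult_right_mono)
      finally show ?thesis using bound2 by (simp add: r_def)
    qed
  qed
  then show ?thesis using C1 by (intro exI[of _ "max C1 C2"]) auto
qed

end

context conic_setup begin

lemma decomp_x:
  fixes x :: 'e
  defines "y \<equiv> pos_part K x" and "n \<equiv> neg_part K x"
  defines "p \<equiv> closest_point FF y"
  shows "p \<in> FF" "x - p = (y - p) + closest_point VV n + closest_point (orthogonal_comp VV) n"
    "norm (y - p) = infdist y FF"
proof -
  show "p \<in> FF" unfolding p_def using FF_props by (intro closest_point_in_set) auto
  have "closest_point (orthogonal_comp VV) n = n - closest_point VV n" using proj_perp[OF VV_sub] .
  then show "x - p = (y - p) + closest_point VV n + closest_point (orthogonal_comp VV) n"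
    by (simp add: y_def n_def pos_part_def neg_part_def)
  show "norm (y - p) = infdist y FF" unfolding p_def
    using infdist_closest[of FF y] FF_props by (auto simp: dist_norm)
qed

lemma main_from_FB:
  fixes f :: "'e \<Rightarrow> real"
  assumes FB: "\<And>x. infdist (pos_part K x) FF \<le> f x"
  shows "(\<exists>\<gamma> \<gamma>'. \<gamma> \<ge> 0 \<and> \<gamma>' \<ge> 0 \<and>
           (\<forall>x. infdist x (primal_solutions A b c K)
                 \<le> (1 + \<gamma> * sigma_max A) * f x + \<gamma> * norm (A x - b)
                   + (1 + \<gamma> * sigma_max A)
                       * norm (closest_point ((compl_space K s)\<^sup>\<bottom>) (neg_part K x))
                   + \<gamma>' * norm (closest_point (compl_space K s) (neg_part K x))))
       \<and> ((\<exists>x0. primal_solutions A b c K = {x0}) \<longrightarrow>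
           (\<forall>x. infdist x (primal_solutions A b c K)
                 \<le> (1 + (1 / sigma_min_on A (compl_space K s)) * sigma_max A) * f x
                   + (1 / sigma_min_on A (compl_space K s)) * norm (A x - b)
                   + (1 + (1 / sigma_min_on A (compl_space K s)) * sigma_max A)
                       * norm (closest_point ((compl_space K s)\<^sup>\<bottom>) (neg_part K x))))
       \<and> (\<forall>x. s \<bullet> pos_part K x
              = (c \<bullet> x - primal_value A b c K) + ys \<bullet> (b - A x) - s \<bullet> neg_part K x)"
proof (intro conjI)
  show "\<forall>x. s \<bullet> pos_part K x = (c \<bullet> x - primal_value A b c K) + ys \<bullet> (b - A x) - s \<bullet> neg_part K x"
    using third by blast
  have sm: "\<And>v. norm (A v) \<le> sigma_max A * norm v" "0 \<le> sigma_max A"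
    using sigma_max_bound[OF lin] by auto
  obtain C where C: "C \<ge> 0" "\<forall>p\<in>FF. infdist p XX \<le> C * norm (A p - b)" using hoffman by blast
  let ?P = "\<lambda>x. closest_point (orthogonal_comp VV) (neg_part K x)"
  let ?Q = "\<lambda>x. closest_point VV (neg_part K x)"
  have gen: "infdist x XX \<le> (1 + C * sigma_max A) * f x + C * norm (A x - b)
                   + (1 + C * sigma_max A) * norm (?P x) + (1 + C * sigma_max A) * norm (?Q x)" for x
  proof -
    define p where "p = closest_point FF (pos_part K x)"
    have pF: "p \<in> FF" and dec: "x - p = (pos_part K x - p) + ?Q x + ?P x"
      and nd: "norm (pos_part K x - p) = infdist (pos_part K x) FF"
      using decomp_x[of x] by (auto simp: p_def)
    have nxp: "norm (x - p) \<le> f x + norm (?P x) + norm (?Q x)"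
    proof -
      have "norm (x - p) \<le> norm (pos_part K x - p) + norm (?Q x) + norm (?P x)"
        unfolding dec by (rule order_trans[OF norm_triangle_ineq]) (simp add: norm_triangle_ineq)
      then show ?thesis using nd FB[of x] by simp
    qed
    have "infdist x XX \<le> infdist p XX + dist x p" by (rule infdist_triangle)
    also have "\<dots> \<le> C * norm (A p - b) + norm (x - p)" using C pF by (simp add: dist_norm)
    also have "norm (A p - b) \<le> norm (A x - b) + sigma_max A * norm (x - p)"
    proof -
      have "A p - b = (A x - b) - A (x - p)" using lin by (simp add: linear_diff)
      then have "norm (A p - b) \<le> norm (A x - b) + norm (A (x - p))" by (metis norm_triangle_ineq4)
      then show ?thesis using sm(1)[of "x - p"] by simp
    qed
    then have "C * norm (A p - b) \<le> C * (norm (A x - b) + sigma_max A * norm (x - p))"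
      using C by (simp add: mult_left_mono)
    finally have "infdist x XX \<le> C * norm (A x - b) + (1 + C * sigma_max A) * norm (x - p)"
      by (simp add: algebra_simps)
    also have "(1 + C * sigma_max A) * norm (x - p) \<le> (1 + C * sigma_max A) * (f x + norm (?P x) + norm (?Q x))"
      using nxp C sm by (intro mult_left_mono) auto
    finally show ?thesis by (simp add: algebra_simps)
  qed
  show "\<exists>\<gamma> \<gamma>'. \<gamma> \<ge> 0 \<and> \<gamma>' \<ge> 0 \<and>
           (\<forall>x. infdist x (primal_solutions A b c K)
                 \<le> (1 + \<gamma> * sigma_max A) * f x + \<gamma> * norm (A x - b)
                   + (1 + \<gamma> * sigma_max A)
                       * norm (closest_point ((compl_space K s)\<^sup>\<bottom>) (neg_part K x))
                   + \<gamma>' * norm (closest_point (compl_space K s) (neg_part K x)))"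
    using gen C sm by (intro exI[of _ C] exI[of _ "1 + C * sigma_max A"]) auto
  show "(\<exists>x0. primal_solutions A b c K = {x0}) \<longrightarrow>
           (\<forall>x. infdist x (primal_solutions A b c K)
                 \<le> (1 + (1 / sigma_min_on A (compl_space K s)) * sigma_max A) * f x
                   + (1 / sigma_min_on A (compl_space K s)) * norm (A x - b)
                   + (1 + (1 / sigma_min_on A (compl_space K s)) * sigma_max A)
                       * norm (closest_point ((compl_space K s)\<^sup>\<bottom>) (neg_part K x)))"
  proof (intro impI allI)
    fix x assume "\<exists>x0. XX = {x0}"
    then have Xs: "XX = {xs}" using xs_sol by auto
    let ?g = "1 / sigma_min_on A VV"
    have inj: "\<forall>v\<in>VV. A v = 0 \<longrightarrow> v = 0"
    proof (intro ballI impI)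
      fix d assume d: "d \<in> VV" "A d = 0"
      show "d = 0"
      proof (rule ccontr)
        assume dn: "d \<noteq> 0"
        obtain e where e: "e > 0" "\<And>z. z \<in> VV \<Longrightarrow> norm (z - xs) < e \<Longrightarrow> z \<in> FF" using ball_FF by blast
        define z where "z = xs + (e / 2 / norm d) *\<^sub>R d"
        have "z \<in> VV" unfolding z_def using FF_props(5) FF_VV VV_sub d
          by (auto intro: subspace_add subspace_scale)
        moreover have "norm (z - xs) < e" using dn e by (simp add: z_def)
        ultimately have "z \<in> FF" using e by blast
        moreover have "A z = b" using lin d xs_props by (simp add: z_def linear_add linear_scale)
        ultimately have "z \<in> XX" using XX_eq by blast
        then have "z = xs" using Xs by simp
        then show False using dn e by (simp add: z_def)
      qed
    qed
    have gb: "norm v \<le> ?g * norm (A v)" if vV: "v \<in> VV" for v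
    proof (cases "VV = {0}")
      case True then show ?thesis using vV lin by (simp add: linear_0)
    next
      case False
      obtain m2 where m2: "m2 > 0" "\<forall>x\<in>VV. m2 * norm x \<le> norm (A x)"
        using inj_bound[OF closed_subspace[OF VV_sub] _ lin inj] VV_sub by (auto simp: subspace_scale)
      let ?S = "(\<lambda>x. norm (A x)) ` {x \<in> VV. norm x = 1}"
      have sdef: "sigma_min_on A VV = Inf ?S" using False by (simp add: sigma_min_on_def)
      obtain u where u: "u \<in> VV" "u \<noteq> 0" using False VV_sub subspace_0 by blast
      have "u /\<^sub>R norm u \<in> {x \<in> VV. norm x = 1}" using u VV_sub by (auto simp: subspace_scale)
      then have Sne: "?S \<noteq> {}" by blast
      have sm2: "m2 \<le> Inf ?S" using Sne m2 by (intro cINF_greatest) force+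
      show ?thesis
      proof (cases "v = 0")
        case True then show ?thesis using lin by (simp add: linear_0)
      next
        case vn: False
        have "v /\<^sub>R norm v \<in> {x \<in> VV. norm x = 1}" using vV vn VV_sub by (auto simp: subspace_scale)
        then have "Inf ?S \<le> norm (A (v /\<^sub>R norm v))"
          by (intro cINF_lower) (auto intro: bdd_belowI[of _ 0])
        also have "\<dots> = norm (A v) / norm v" using lin vn by (simp add: linear_scale divide_inverse_commute)
        finally have "Inf ?S * norm v \<le> norm (A v)" using vn by (simp add: field_simps)
        moreover have "Inf ?S > 0" using sm2 m2 by linarith
        ultimately show ?thesis using sdef by (simp add: field_simps)
      qed
    qed
    have g0: "?g \<ge> 0"
    proof -
      have "sigma_min_on A VV \<ge> 0"
      proof (cases "VV = {0}")
        case True then show ?thesis by (simp add: sigma_min_on_def)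
      next
        case False
        obtain u where u: "u \<in> VV" "u \<noteq> 0" using False VV_sub subspace_0 by blast
        have "u /\<^sub>R norm u \<in> {x \<in> VV. norm x = 1}" using u VV_sub by (auto simp: subspace_scale)
        then have "{x \<in> VV. norm x = 1} \<noteq> {}" by blast
        then show ?thesis using False unfolding sigma_min_on_def by (auto intro!: cINF_greatest)
      qed
      then show ?thesis by simp
    qed
    define p where "p = closest_point FF (pos_part K x)"
    have pF: "p \<in> FF" and dec: "x - p = (pos_part K x - p) + ?Q x + ?P x"
      and nd: "norm (pos_part K x - p) = infdist (pos_part K x) FF"
      using decomp_x[of x] by (auto simp: p_def)
    define u where "u = p + ?Q x"
    have uV: "u \<in> VV" unfolding u_def using pF FF_VV VV_sub proj_subspace[OF VV_sub]
      by (auto intro: subspace_add)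
    have xu: "x - u = (pos_part K x - p) + ?P x" using dec by (simp add: u_def algebra_simps)
    have nxu: "norm (x - u) \<le> f x + norm (?P x)"
      using norm_triangle_ineq[of "pos_part K x - p" "?P x"] nd FB[of x] xu by simp
    have "infdist x XX = norm (x - xs)" using Xs by (simp add: dist_norm)
    also have "\<dots> \<le> norm (x - u) + norm (u - xs)" using norm_triangle_ineq[of "x - u" "u - xs"] by simp
    also have "norm (u - xs) \<le> ?g * norm (A (u - xs))"
      using gb uV FF_props(5) FF_VV VV_sub by (auto intro: subspace_diff)
    also have "A (u - xs) = (A x - b) - A (x - u)" using lin xs_props by (simp add: linear_diff)
    also have "?g * norm \<dots> \<le> ?g * (norm (A x - b) + sigma_max A * norm (x - u))"
      using g0 sm(1)[of "x - u"] norm_triangle_ineq4[of "A x - b" "A (x - u)"]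
      by (intro mult_left_mono) auto
    finally have "infdist x XX \<le> ?g * norm (A x - b) + (1 + ?g * sigma_max A) * norm (x - u)"
      by (simp add: algebra_simps)
    also have "(1 + ?g * sigma_max A) * norm (x - u) \<le> (1 + ?g * sigma_max A) * (f x + norm (?P x))"
      using nxu g0 sm by (intro mult_left_mono) auto
    finally show "infdist x XX \<le> (1 + ?g * sigma_max A) * f x + ?g * norm (A x - b)
                   + (1 + ?g * sigma_max A) * norm (?P x)" by (simp add: algebra_simps)
  qed
qed

end

context conic_setup begin

lemma pos_in_K: "pos_part K x \<in> K"
  unfolding pos_part_def using K_props by (intro closest_point_in_set) auto

lemma FB_zero: assumes "case_zero K s f" shows "infdist (pos_part K x) FF \<le> f x"
proof -
  have "s = 0" "f = (\<lambda>x. 0)" using assms by (auto simp: case_zero_def)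
  then have "pos_part K x \<in> FF" using pos_in_K by (simp add: compl_face_def)
  then show ?thesis using \<open>f = (\<lambda>x. 0)\<close> by (simp add: infdist_zero)
qed

lemma FB_interior: assumes "case_interior K s f" shows "infdist (pos_part K x) FF \<le> f x"
proof -
  have si: "s \<in> interior (dual_cone K)" and fd: "f = (\<lambda>x. interior_const K s * (s \<bullet> pos_part K x))"
    using assms by (auto simp: case_interior_def)
  obtain r where r: "r > 0" "ball s r \<subseteq> dual_cone K" using si by (auto simp: mem_interior)
  have lb: "s \<bullet> y \<ge> (r/2) * norm y" if yK: "y \<in> K" for y
  proof (cases "y = 0")
    case True then show ?thesis by simp
  next
    case False
    have "s - ((r/2) / norm y) *\<^sub>R y \<in> ball s r" using r False by (simp add: dist_norm)
    then have "s - ((r/2) / norm y) *\<^sub>R y \<in> dual_cone K" using r by blast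
    then have "0 \<le> (s - ((r/2) / norm y) *\<^sub>R y) \<bullet> y" using yK by (simp add: dual_cone_def)
    also have "\<dots> = s \<bullet> y - (r/2) * norm y" using False
      by (simp add: inner_diff_left power2_norm_eq_inner[symmetric] power2_eq_square)
    finally show ?thesis by simp
  qed
  define g where "g = (\<lambda>x. 1 / (s \<bullet> (x /\<^sub>R norm x)))"
  have gb: "g y \<le> 2 / r" if "y \<in> K - {0}" for y
  proof -
    have y: "y \<in> K" "y \<noteq> 0" using that by auto
    have "s \<bullet> (y /\<^sub>R norm y) = (s \<bullet> y) / norm y" by (simp add: divide_inverse_commute)
    also have "\<dots> \<ge> r / 2" using lb[OF y(1)] y(2) by (simp add: field_simps)
    finally have "s \<bullet> (y /\<^sub>R norm y) \<ge> r / 2" .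
    then show ?thesis unfolding g_def using r by (simp add: divide_le_eq)
  qed
  have bdd: "bdd_above (g ` (K - {0}))" using gb by (intro bdd_aboveI[of _ "2/r"]) auto
  let ?y = "pos_part K x"
  show ?thesis
  proof (cases "?y = 0")
    case True
    then have "?y \<in> FF" using FF_props(4) by simp
    then show ?thesis using True fd by (simp add: infdist_zero)
  next
    case False
    have yK: "?y \<in> K" by (rule pos_in_K)
    have "(r/2) * norm ?y > 0" using r False by simp
    then have sy: "s \<bullet> ?y > 0" using lb[OF yK] by linarith
    have "g ?y \<le> interior_const K s" unfolding interior_const_def g_def[symmetric]
      using bdd yK False by (intro cSUP_upper) auto
    moreover have "g ?y = norm ?y / (s \<bullet> ?y)" unfolding g_def using False by (simp add: divide_inverse_commute)
    ultimately have "norm ?y \<le> interior_const K s * (s \<bullet> ?y)" using sy by (simp add: divide_le_eq)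
    moreover have "infdist ?y FF \<le> norm ?y" using infdist_le[OF FF_props(4)] by (simp add: dist_norm)
    ultimately show ?thesis using fd by simp
  qed
qed

end

lemma iso_props:
  assumes "isometric_onto T S"
  shows "linear T" "\<And>x y. T x \<bullet> T y = x \<bullet> y" "range T = S" "\<And>x. norm (T x) = norm x"
    "\<And>x y. norm (T x - T y) = norm (x - y)"
proof -
  show l: "linear T" and i: "\<And>x y. T x \<bullet> T y = x \<bullet> y" and "range T = S"
    using assms by (auto simp: isometric_onto_def)
  show n: "\<And>x. norm (T x) = norm x" using i by (simp add: norm_eq_sqrt_inner)
  show "\<And>x y. norm (T x - T y) = norm (x - y)" using n l by (metis linear_diff)
qed

context conic_setup begin

lemma FB_orthant:
  fixes T :: "'e \<Rightarrow> real^'n"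
  assumes "case_orthant K s f T" shows "infdist (pos_part K x) FF \<le> f x"
proof -
  have iso: "isometric_onto T UNIV" and Kd: "K = T -` {v. \<forall>i. 0 \<le> v $ i}"
    and sn: "s \<noteq> 0" and fd: "f = (\<lambda>x. (s \<bullet> pos_part K x) / Inf {T s $ i | i. T s $ i \<noteq> 0})"
    using assms by (auto simp: case_orthant_def)
  note I = iso_props[OF iso]
  have surj: "\<exists>z. T z = v" for v using I(3) by (metis UNIV_I image_iff)
  define \<sigma> where "\<sigma> = T s"
  have sig0: "\<sigma> $ i \<ge> 0" for i
  proof -
    obtain k where k: "T k = axis i 1" using surj by blast
    have "k \<in> K" using Kd k by (auto simp: axis_def)
    then have "0 \<le> s \<bullet> k" by (rule s_nonneg)
    also have "s \<bullet> k = \<sigma> \<bullet> axis i 1" using I(2)[of s k] k by (simp add: \<sigma>_def)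
    also have "\<dots> = \<sigma> $ i" by (simp add: inner_axis)
    finally show ?thesis .
  qed
  have "norm \<sigma> \<noteq> 0" using I(4) sn by (simp add: \<sigma>_def)
  then obtain i0 where i0: "\<sigma> $ i0 \<noteq> 0" by (metis norm_eq_zero vec_eq_iff zero_index)
  define M where "M = {\<sigma> $ i | i. \<sigma> $ i \<noteq> 0}"
  have Mf: "finite M" unfolding M_def by (rule finite_image_set) simp
  have Mne: "M \<noteq> {}" using i0 by (auto simp: M_def)
  define mn where "mn = Inf M"
  have mnM: "mn \<in> M" unfolding mn_def using cInf_eq_Min[OF Mf Mne] Min_in[OF Mf Mne] by simp
  have mn0: "mn > 0" using mnM sig0 by (auto simp: M_def) (metis less_eq_real_def)
  have mnle: "mn \<le> \<sigma> $ i" if "\<sigma> $ i \<noteq> 0" for i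
    unfolding mn_def using that Mf by (intro cInf_lower) (auto simp: M_def)
  let ?y = "pos_part K x"
  define Y where "Y = T ?y"
  have Y0: "Y $ i \<ge> 0" for i using pos_in_K Kd by (auto simp: Y_def)
  define Z where "Z = (\<chi> i. if \<sigma> $ i = 0 then Y $ i else 0)"
  obtain z where z: "T z = Z" using surj by blast
  have zK: "z \<in> K" using Kd z Y0 by (auto simp: Z_def)
  have "z \<bullet> s = Z \<bullet> \<sigma>" using I(2)[of z s] z by (simp add: \<sigma>_def)
  also have "\<dots> = 0" unfolding inner_vec_def Z_def by (intro sum.neutral) auto
  finally have zF: "z \<in> FF" using zK by (simp add: compl_face_def)
  have "infdist ?y FF \<le> norm (?y - z)" using infdist_le[OF zF] by (simp add: dist_norm)
  also have "\<dots> = norm (Y - Z)" using I(5)[of ?y z] z by (simp add: Y_def)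
  also have "\<dots> \<le> (\<Sum>i\<in>UNIV. \<bar>(Y - Z) $ i\<bar>)" by (rule norm_le_l1_cart)
  also have "\<dots> \<le> (\<Sum>i\<in>UNIV. Y $ i * \<sigma> $ i / mn)"
  proof (rule sum_mono)
    fix i
    show "\<bar>(Y - Z) $ i\<bar> \<le> Y $ i * \<sigma> $ i / mn"
    proof (cases "\<sigma> $ i = 0")
      case True then show ?thesis by (simp add: Z_def)
    next
      case False
      have "Y $ i * mn \<le> Y $ i * \<sigma> $ i" using mnle[OF False] Y0[of i] by (simp add: mult_left_mono)
      then show ?thesis using False Y0[of i] mn0 by (simp add: Z_def field_simps)
    qed
  qed
  also have "\<dots> = (Y \<bullet> \<sigma>) / mn" by (simp add: inner_vec_def sum_divide_distrib)
  also have "Y \<bullet> \<sigma> = s \<bullet> ?y" using I(2)[of ?y s] by (simp add: Y_def \<sigma>_def inner_commute)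
  finally show ?thesis using fd by (simp add: mn_def M_def \<sigma>_def)
qed

end

lemma soc_ineq:
  fixes N P \<tau> \<alpha> X :: real
  assumes a: "\<alpha> > 0" and N: "N \<le> \<tau>^2" and tX: "\<tau> \<le> X" and e: "\<tau> + P / \<alpha> \<ge> 0"
  shows "N + \<tau>^2 - (\<alpha> * \<tau> - P)^2 / (2 * \<alpha>^2) \<le> 2 * X * (\<tau> + P / \<alpha>)"
proof -
  have "N + \<tau>^2 - (\<alpha> * \<tau> - P)^2 / (2 * \<alpha>^2) \<le> 2 * \<tau>^2 - (\<alpha> * \<tau> - P)^2 / (2 * \<alpha>^2)" using N by simp
  also have "\<dots> \<le> 2 * \<tau> * (\<tau> + P / \<alpha>)"
  proof -
    have "0 \<le> (\<alpha> * \<tau> + P)^2 / (2 * \<alpha>^2)" by simp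
    moreover have "(\<alpha> * \<tau> + P)^2 / (2 * \<alpha>^2) = 2 * \<tau> * (\<tau> + P / \<alpha>) - (2 * \<tau>^2 - (\<alpha> * \<tau> - P)^2 / (2 * \<alpha>^2))"
      using a by (simp add: field_simps power2_eq_square)
    ultimately show ?thesis by linarith
  qed
  also have "\<dots> \<le> 2 * X * (\<tau> + P / \<alpha>)" using tX e by (simp add: mult_right_mono)
  finally show ?thesis .
qed

context conic_setup begin

lemma FB_soc:
  fixes T :: "'e \<Rightarrow> (real^'n) \<times> real"
  assumes "case_soc K s f T" shows "infdist (pos_part K x) FF \<le> f x"
proof -
  have iso: "isometric_onto T UNIV" and Kd: "K = T -` {(u, t). norm u \<le> t}"
    and sf: "s \<in> frontier (dual_cone K)" and sn: "s \<noteq> 0"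
    and fd: "f = (\<lambda>x. sqrt (2 * sqrt 2 * norm x * (s \<bullet> pos_part K x) / norm s))"
    using assms by (auto simp: case_soc_def)
  note I = iso_props[OF iso]
  have surj: "\<exists>z. T z = v" for v using I(3) by (metis UNIV_I image_iff)
  obtain a \<alpha> where Ts: "T s = (a, \<alpha>)" by (cases "T s") auto
  have inK: "k \<in> K \<longleftrightarrow> norm (fst (T k)) \<le> snd (T k)" for k using Kd by (auto simp: case_prod_beta)
  have sk: "s \<bullet> k = a \<bullet> fst (T k) + \<alpha> * snd (T k)" for k
    using I(2)[of s k] Ts by (cases "T k") auto
  have al: "\<alpha> \<ge> norm a"
  proof -
    obtain k where k: "T k = (-a, norm a)" using surj by blast
    obtain k' where k': "T k' = (0, 1)" using surj by blast
    have "0 \<le> s \<bullet> k" using k inK by (intro s_nonneg) simp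
    then have 1: "0 \<le> norm a * (\<alpha> - norm a)" using sk[of k] k
      by (simp add: power2_norm_eq_inner[symmetric] power2_eq_square algebra_simps)
    have "0 \<le> s \<bullet> k'" using k' inK by (intro s_nonneg) simp
    then have 2: "0 \<le> \<alpha>" using sk[of k'] k' by simp
    show ?thesis
    proof (cases "norm a = 0")
      case True then show ?thesis using 2 by simp
    next
      case False then have "norm a > 0" by simp
      then show ?thesis using 1 by (simp add: zero_le_mult_iff)
    qed
  qed
  have aeq: "\<alpha> = norm a"
  proof (rule ccontr)
    assume "\<alpha> \<noteq> norm a"
    then have gt: "\<alpha> > norm a" using al by simp
    define r where "r = (\<alpha> - norm a) / 2"
    have r: "r > 0" using gt by (simp add: r_def)
    have "ball s r \<subseteq> dual_cone K"
    proof
      fix s' assume "s' \<in> ball s r"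
      then have d: "norm (T s' - T s) < r" using I(5)[of s' s] by (simp add: dist_norm norm_minus_commute)
      obtain a' \<alpha>' where Ts': "T s' = (a', \<alpha>')" by (cases "T s'") auto
      have "norm (a' - a) < r" "\<bar>\<alpha>' - \<alpha>\<bar> < r"
        using d Ts Ts' norm_fst_le[of "a' - a" "\<alpha>' - \<alpha>"] norm_snd_le[of "\<alpha>' - \<alpha>" "a' - a"] by auto
      then have "norm a' < norm a + r" "\<alpha>' > \<alpha> - r" using norm_triangle_ineq2[of a' a] by auto
      then have ga: "\<alpha>' \<ge> norm a'" unfolding r_def by (simp add: field_simps)
      show "s' \<in> dual_cone K" unfolding dual_cone_def
      proof (intro CollectI ballI)
        fix k assume kK: "k \<in> K"
        obtain u t where Tk: "T k = (u, t)" by (cases "T k") auto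
        have ut: "norm u \<le> t" using kK inK Tk by simp
        have "s' \<bullet> k = a' \<bullet> u + \<alpha>' * t" using I(2)[of s' k] Ts' Tk by simp
        also have "\<dots> \<ge> - (norm a' * norm u) + \<alpha>' * t"
          using Cauchy_Schwarz_ineq2[of a' u] by linarith
        also have "- (norm a' * norm u) + \<alpha>' * t \<ge> 0"
        proof -
          have "norm a' * norm u \<le> norm a' * t" using ut by (simp add: mult_left_mono)
          also have "\<dots> \<le> \<alpha>' * t" using ga ut norm_ge_zero[of u] by (intro mult_right_mono) linarith+
          finally show ?thesis by simp
        qed
        finally show "0 \<le> s' \<bullet> k" .
      qed
    qed
    then have "s \<in> interior (dual_cone K)" using r by (auto simp: mem_interior)
    then show False using sf by (simp add: frontier_def)
  qed
  have apos: "\<alpha> > 0"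
  proof (rule ccontr)
    assume "\<not> \<alpha> > 0"
    then have "\<alpha> = 0" "a = 0" using al aeq by auto
    then have "norm (T s) = 0" using Ts by simp
    then show False using I(4) sn by simp
  qed
  have ns: "norm s = sqrt 2 * \<alpha>"
  proof -
    have "norm s = norm (T s)" using I(4) by simp
    also have "\<dots> = sqrt ((norm a)^2 + \<alpha>^2)" using Ts by (simp add: norm_Pair)
    also have "\<dots> = sqrt (2 * \<alpha>^2)" using aeq by simp
    also have "\<dots> = sqrt 2 * \<alpha>" using apos by (simp add: real_sqrt_mult)
    finally show ?thesis .
  qed
  let ?y = "pos_part K x"
  obtain u \<tau> where Ty: "T ?y = (u, \<tau>)" by (cases "T ?y") auto
  have ut: "norm u \<le> \<tau>" using pos_in_K inK Ty by (metis fst_conv snd_conv)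
  define P where "P = a \<bullet> u"
  define l where "l = (\<alpha> * \<tau> - P) / (2 * \<alpha>^2)"
  have l0: "l \<ge> 0"
  proof -
    have "P \<le> norm a * norm u" unfolding P_def by (rule norm_cauchy_schwarz)
    also have "\<dots> \<le> \<alpha> * \<tau>" using aeq ut by (simp add: mult_left_mono)
    finally show ?thesis using apos by (simp add: l_def)
  qed
  obtain z where z: "T z = (l *\<^sub>R (-a), l * \<alpha>)" using surj by blast
  have zF: "z \<in> FF"
  proof -
    have "z \<in> K" using inK z l0 aeq by simp
    moreover have "z \<bullet> s = 0" using sk[of z] z aeq by (simp add: inner_commute power2_norm_eq_inner[symmetric] power2_eq_square)
    ultimately show ?thesis by (simp add: compl_face_def)
  qed
  define E where "E = \<tau> + P / \<alpha>"
  have eps: "s \<bullet> ?y = \<alpha> * E"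
  proof -
    have "s \<bullet> ?y = P + \<alpha> * \<tau>" using sk[of ?y] Ty by (simp add: P_def)
    also have "\<dots> = \<alpha> * E" using apos by (simp add: E_def distrib_left)
    finally show ?thesis .
  qed
  have "0 \<le> \<alpha> * E" using s_nonneg[OF pos_in_K[of x]] eps by simp
  then have e0: "E \<ge> 0" using apos by (simp add: zero_le_mult_iff)
  have ny: "\<tau> \<le> norm x"
  proof -
    have "\<tau> \<le> norm (T ?y)" using Ty norm_snd_le[of \<tau> u] by simp
    also have "\<dots> = norm ?y" using I(4) by simp
    also have "\<dots> \<le> norm x" unfolding pos_part_def by (rule moreau(4)[OF K_props(3) K_props(2) K_props(1) K_props(4)])
    finally show ?thesis .
  qed
  define D where "D = \<alpha> * \<tau> - P"
  have lD: "l * (2 * \<alpha>^2) = D" using apos by (simp add: l_def D_def)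
  have sq: "(norm (?y - z))^2 = (norm u)^2 + \<tau>^2 - D^2 / (2 * \<alpha>^2)"
  proof -
    have "norm (?y - z) = norm (T ?y - T z)" using I(5) by simp
    also have "T ?y - T z = (u + l *\<^sub>R a, \<tau> - l * \<alpha>)" using Ty z by simp
    finally have "(norm (?y - z))^2 = (norm (u + l *\<^sub>R a))^2 + (\<tau> - l * \<alpha>)^2"
      by (simp add: norm_Pair)
    also have "(norm (u + l *\<^sub>R a))^2 = (norm u)^2 + 2 * l * P + l^2 * \<alpha>^2"
    proof -
      have "(norm (u + l *\<^sub>R a))^2 = (u + l *\<^sub>R a) \<bullet> (u + l *\<^sub>R a)" by (simp add: power2_norm_eq_inner)
      also have "\<dots> = u \<bullet> u + 2 * l * (a \<bullet> u) + l^2 * (a \<bullet> a)"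
        by (simp add: inner_add_left inner_add_right inner_commute power2_eq_square algebra_simps)
      also have "a \<bullet> a = \<alpha>^2" using aeq by (simp add: power2_norm_eq_inner)
      also have "u \<bullet> u = (norm u)^2" by (simp add: power2_norm_eq_inner)
      finally show ?thesis by (simp add: P_def)
    qed
    also have "(\<tau> - l * \<alpha>)^2 = \<tau>^2 - 2 * l * \<alpha> * \<tau> + l^2 * \<alpha>^2" by (simp add: power2_eq_square algebra_simps)
    finally have "(norm (?y - z))^2 = (norm u)^2 + \<tau>^2 - 2 * l * D + l * (l * (2 * \<alpha>^2))"
      by (simp add: D_def power2_eq_square algebra_simps)
    also have "\<dots> = (norm u)^2 + \<tau>^2 - l * D" using lD by simp
    also have "l * D = D^2 / (2 * \<alpha>^2)" using apos by (simp add: l_def D_def power2_eq_square)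
    finally show ?thesis .
  qed
  have "(norm (?y - z))^2 \<le> 2 * norm x * E"
    unfolding sq D_def E_def using apos ut ny e0 by (intro soc_ineq) (auto simp: power_mono E_def)
  also have "2 * norm x * E = 2 * sqrt 2 * norm x * (s \<bullet> ?y) / norm s"
  proof -
    have "2 * sqrt 2 * norm x * (s \<bullet> ?y) / norm s = (sqrt 2 * \<alpha>) * (2 * norm x * E) / (sqrt 2 * \<alpha>)"
      by (simp add: eps ns algebra_simps)
    also have "\<dots> = 2 * norm x * E" using apos by simp
    finally show ?thesis by simp
  qed
  finally have "norm (?y - z) \<le> f x" using fd by (simp add: real_le_rsqrt)
  then show ?thesis using infdist_le[OF zF, of ?y] by (simp add: dist_norm)
qed

end

definition outer :: "real^'n \<Rightarrow> real^'n \<Rightarrow> real^'n^'n" where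
  "outer a b = (\<chi> i j. a $ i * b $ j)"

lemma outer_mult: "outer a b *v v = (b \<bullet> v) *\<^sub>R a"
  by (simp add: vec_eq_iff outer_def matrix_vector_mult_def inner_vec_def sum_distrib_left mult_ac)

lemma inner_outer: "M \<bullet> outer a b = a \<bullet> (M *v b)"
  by (simp add: inner_vec_def outer_def matrix_vector_mult_def sum_distrib_left mult_ac)

lemma outer_outer: "outer a b \<bullet> outer c d = (a \<bullet> c) * (b \<bullet> d)"
  by (simp add: inner_outer outer_mult inner_commute)

lemma transpose_outer: "transpose (outer a a) = outer a a"
  by (simp add: transpose_def outer_def vec_eq_iff mult.commute)

lemma outer_scale: "outer (r *\<^sub>R a) (r *\<^sub>R a) = (r^2) *\<^sub>R outer a a"
  by (simp add: outer_def vec_eq_iff power2_eq_square mult_ac)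

lemma sym_dot:
  fixes M :: "real^'n^'n"
  assumes "transpose M = M"
  shows "(M *v a) \<bullet> b = a \<bullet> (M *v b)"
proof -
  have "M *v a = a v* M" using transpose_matrix_vector[of M a] assms by simp
  then show ?thesis by (simp add: dot_lmul_matrix)
qed

lemma psd_sym: "psd M \<Longrightarrow> transpose M = M" by (simp add: psd_def)

lemma psd_outer: "psd (outer a a)"
  unfolding psd_def by (simp add: transpose_outer outer_mult inner_commute)

lemma sum_mult_vec: "(\<Sum>k\<in>A. M k) *v v = (\<Sum>k\<in>A. M k *v v)"
  by (induct A rule: infinite_finite_induct) (simp_all add: matrix_vector_mult_add_rdistrib)

lemma transpose_sum: "transpose (\<Sum>k\<in>A. M k) = (\<Sum>k\<in>A. transpose (M k))"
  by (simp add: transpose_def vec_eq_iff)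

lemma psd_add: "psd M \<Longrightarrow> psd N \<Longrightarrow> psd (M + N)"
  unfolding psd_def
  by (simp add: transpose_def vec_eq_iff matrix_vector_mult_add_rdistrib inner_add_right add_nonneg_nonneg)

lemma psd_zero: "psd (0 :: real^'n^'n)"
  by (simp add: psd_def transpose_def vec_eq_iff)

lemma psd_sum: "(\<And>k. k \<in> A \<Longrightarrow> psd (M k)) \<Longrightarrow> psd (\<Sum>k\<in>A. M k)"
  by (induct A rule: infinite_finite_induct) (simp_all add: psd_zero psd_add)

lemma psd_sum_outer: "psd (\<Sum>k\<in>A. outer (w k) (w k))"
  by (intro psd_sum psd_outer)

lemma sum_outer_mult: "(\<Sum>k\<in>A. outer (w k) (w k)) *v v = (\<Sum>k\<in>A. (w k \<bullet> v) *\<^sub>R w k)"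
  by (simp add: sum_mult_vec outer_mult)

lemma quad_expand:
  fixes M :: "real^'n^'n"
  assumes "transpose M = M"
  shows "(v + t *\<^sub>R w) \<bullet> (M *v (v + t *\<^sub>R w)) = v \<bullet> (M *v v) + 2 * t * (w \<bullet> (M *v v)) + t^2 * (w \<bullet> (M *v w))"
proof -
  have s: "v \<bullet> (M *v w) = w \<bullet> (M *v v)" using sym_dot[OF assms, of w v] by (simp add: inner_commute)
  show ?thesis
    by (simp add: matrix_vector_right_distrib matrix_vector_mult_scaleR inner_add_left inner_add_right s
        power2_eq_square algebra_simps)
qed

lemma psd_null:
  fixes M :: "real^'n^'n"
  assumes "psd M" "v \<bullet> (M *v v) = 0"
  shows "M *v v = 0"
proof -
  have sym: "transpose M = M" using assms(1) by (simp add: psd_def)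
  let ?w = "M *v v"
  have "\<forall>t. 0 \<le> (2 * (?w \<bullet> (M *v v))) * t + (?w \<bullet> (M *v ?w)) * t^2"
  proof
    fix t
    have "0 \<le> (v + t *\<^sub>R ?w) \<bullet> (M *v (v + t *\<^sub>R ?w))" using assms(1) by (simp add: psd_def)
    then show "0 \<le> (2 * (?w \<bullet> (M *v v))) * t + (?w \<bullet> (M *v ?w)) * t^2"
      using quad_expand[OF sym, of v t ?w] assms(2) by (simp add: algebra_simps)
  qed
  then have "2 * (?w \<bullet> (M *v v)) = 0" by (rule quad_zero)
  then show ?thesis by simp
qed

lemma psd_cs:
  fixes M :: "real^'n^'n"
  assumes "psd M"
  shows "(u \<bullet> (M *v w))^2 \<le> (u \<bullet> (M *v u)) * (w \<bullet> (M *v w))"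
proof -
  have sym: "transpose M = M" using assms(1) by (simp add: psd_def)
  have "\<forall>t. 0 \<le> u \<bullet> (M *v u) + 2 * (w \<bullet> (M *v u)) * t + (w \<bullet> (M *v w)) * t^2"
  proof
    fix t
    have "0 \<le> (u + t *\<^sub>R w) \<bullet> (M *v (u + t *\<^sub>R w))" using assms(1) by (simp add: psd_def)
    then show "0 \<le> u \<bullet> (M *v u) + 2 * (w \<bullet> (M *v u)) * t + (w \<bullet> (M *v w)) * t^2"
      using quad_expand[OF sym, of u t w] by (simp add: algebra_simps)
  qed
  then have "(w \<bullet> (M *v u))^2 \<le> (u \<bullet> (M *v u)) * (w \<bullet> (M *v w))" by (rule discr_le)
  moreover have "w \<bullet> (M *v u) = u \<bullet> (M *v w)" using sym_dot[OF sym, of w u] by (simp add: inner_commute)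
  ultimately show ?thesis by simp
qed

lemma scaleR_mat_mult: "((c::real) *\<^sub>R (M::real^'n^'m)) *v v = c *\<^sub>R (M *v v)"
  by (simp add: vec_eq_iff matrix_vector_mult_def sum_distrib_left mult.assoc vector_scaleR_component)

lemma psd_diag: "psd Y \<Longrightarrow> axis i 1 \<bullet> (Y *v axis i 1) = Y $ i $ i"
  by (simp add: matrix_vector_mult_basis column_def inner_axis')

lemma psd_entry_sym: "psd Y \<Longrightarrow> Y $ i $ j = Y $ j $ i"
  unfolding psd_def by (metis transpose_def vec_lambda_beta)

lemma psd_decomp_aux:
  fixes Y :: "real^'n^'n"
  assumes "finite R"
  shows "psd Y \<Longrightarrow> (\<forall>i j. i \<notin> R \<or> j \<notin> R \<longrightarrow> Y $ i $ j = 0) \<Longrightarrow> \<exists>(m::nat) w. Y = (\<Sum>k<m. outer (w k) (w k))"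
  using assms
proof (induction R arbitrary: Y rule: finite_induct)
  case empty
  then have "Y = 0" by (simp add: vec_eq_iff)
  then show ?case by (intro exI[where x="0::nat"] exI[where x="\<lambda>k::nat. 0::real^'n"]) simp
next
  case (insert i R0)
  have psdY: "psd Y" using insert.prems(1) .
  have symY: "transpose Y = Y" using psdY by (simp add: psd_def)
  define e :: "real^'n" where "e = axis i 1"
  define cc where "cc = Y *v e"
  have ccj: "cc $ j = Y $ j $ i" for j by (simp add: cc_def e_def matrix_vector_mult_basis column_def)
  define d where "d = Y $ i $ i"
  have de: "e \<bullet> (Y *v e) = d" using psd_diag[OF psdY] by (simp add: e_def d_def)
  have d0: "d \<ge> 0" using psdY de by (metis psd_def)
  show ?case
  proof (cases "d = 0")
    case True
    then have "cc = 0" using psd_null[OF psdY] de by (simp add: cc_def)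
    then have z: "Y $ j $ i = 0" for j using ccj by (metis zero_index)
    have "\<forall>j k. j \<notin> R0 \<or> k \<notin> R0 \<longrightarrow> Y $ j $ k = 0"
    proof (intro allI impI)
      fix j k assume "j \<notin> R0 \<or> k \<notin> R0"
      then show "Y $ j $ k = 0"
        using insert.prems(2) z psd_entry_sym[OF psdY, of j k] by (cases "j = i"; cases "k = i") auto
    qed
    then show ?thesis using insert.IH psdY by blast
  next
    case False
    then have dp: "d > 0" using d0 by simp
    define Y' where "Y' = Y - (1 / d) *\<^sub>R outer cc cc"
    have psdY': "psd Y'"
      unfolding psd_def
    proof
      show "transpose Y' = Y'" unfolding Y'_def using symY
        by (simp add: transpose_def vec_eq_iff outer_def mult.commute psd_entry_sym[OF psdY])
      show "\<forall>v. 0 \<le> v \<bullet> (Y' *v v)"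
      proof
        fix v
        have cv: "cc \<bullet> v = e \<bullet> (Y *v v)" unfolding cc_def by (rule sym_dot[OF symY])
        have "(e \<bullet> (Y *v v))^2 \<le> d * (v \<bullet> (Y *v v))" using psd_cs[OF psdY, of e v] de by simp
        then have "(cc \<bullet> v)^2 / d \<le> v \<bullet> (Y *v v)" using dp cv by (simp add: divide_le_eq mult.commute)
        moreover have "v \<bullet> (Y' *v v) = v \<bullet> (Y *v v) - (cc \<bullet> v)^2 / d"
          by (simp add: Y'_def matrix_vector_mult_diff_rdistrib outer_mult inner_diff_right
              scaleR_mat_mult inner_commute power2_eq_square)
        ultimately show "0 \<le> v \<bullet> (Y' *v v)" by simp
      qed
    qed
    have "\<forall>j k. j \<notin> R0 \<or> k \<notin> R0 \<longrightarrow> Y' $ j $ k = 0"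
    proof (intro allI impI)
      fix j k assume jk: "j \<notin> R0 \<or> k \<notin> R0"
      have Yjk: "Y' $ j $ k = Y $ j $ k - Y $ j $ i * Y $ k $ i / d"
        by (simp add: Y'_def outer_def ccj)
      show "Y' $ j $ k = 0"
      proof (cases "j = i")
        case True then show ?thesis using Yjk dp psd_entry_sym[OF psdY, of i k] by (simp add: d_def)
      next
        case ji: False
        show ?thesis
        proof (cases "k = i")
          case True then show ?thesis using Yjk dp by (simp add: d_def)
        next
          case ki: False
          have "j \<notin> insert i R0 \<or> k \<notin> insert i R0" using jk ji ki by auto
          then have "Y $ j $ k = 0" "Y $ j $ i = 0 \<or> Y $ k $ i = 0"
            using insert.prems(2) by auto
          then show ?thesis using Yjk by auto
        qed
      qed
    qed
    then obtain m :: nat and w where mw: "Y' = (\<Sum>k<m. outer (w k) (w k))" using insert.IH psdY' by blast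
    define w' where "w' = w(m := (1 / sqrt d) *\<^sub>R cc)"
    have "Y = Y' + (1 / d) *\<^sub>R outer cc cc" by (simp add: Y'_def)
    also have "(1 / d) *\<^sub>R outer cc cc = outer (w' m) (w' m)"
      using dp by (simp add: w'_def outer_scale power_divide)
    also have "Y' = (\<Sum>k<m. outer (w' k) (w' k))" using mw by (simp add: w'_def)
    finally have "Y = (\<Sum>k<Suc m. outer (w' k) (w' k))" by simp
    then show ?thesis by blast
  qed
qed

lemma psd_decomp:
  fixes Y :: "real^'n^'n"
  assumes "psd Y"
  shows "\<exists>(m::nat) w. Y = (\<Sum>k<m. outer (w k) (w k))"
  using psd_decomp_aux[of UNIV Y] assms by simp

lemma psd_opnorm_bound:
  fixes Y G X :: "real^'n^'n"
  assumes Yd: "Y = (\<Sum>k<m. outer (w k) (w k))" and Xd: "X = Y + G"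
    and Gw: "\<And>k. k < m \<Longrightarrow> G *v w k = 0"
  shows "norm (Y *v v) \<le> onorm (\<lambda>v. X *v v) * norm v"
proof -
  define U where "U = span (w ` {..<m})"
  have Usub: "subspace U" by (simp add: U_def)
  define v1 where "v1 = closest_point U v"
  have v1: "v1 \<in> U" "\<forall>u\<in>U. (v - v1) \<bullet> u = 0" using proj_subspace[OF Usub] by (auto simp: v1_def)
  have wU: "w k \<in> U" if "k < m" for k using that by (auto simp: U_def intro: span_base)
  have Yv2: "Y *v (v - v1) = 0"
  proof -
    have "Y *v (v - v1) = (\<Sum>k<m. (w k \<bullet> (v - v1)) *\<^sub>R w k)" by (simp add: Yd sum_outer_mult)
    also have "\<dots> = 0" using v1(2) wU by (intro sum.neutral) (auto simp: inner_commute)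
    finally show ?thesis .
  qed
  have "U \<subseteq> {u. G *v u = 0}"
    unfolding U_def using Gw by (intro span_minimal subspace_ker) auto
  then have Gv1: "G *v v1 = 0" using v1(1) by blast
  have "Y *v v = Y *v v1 + Y *v (v - v1)" by (simp add: matrix_vector_right_distrib[symmetric])
  also have "\<dots> = X *v v1" using Yv2 Gv1 by (simp add: Xd matrix_vector_mult_add_rdistrib)
  finally have eq: "Y *v v = X *v v1" .
  have bl: "bounded_linear (\<lambda>v. X *v v)" by (simp add: linear_conv_bounded_linear)
  have "norm (X *v v1) \<le> onorm (\<lambda>v. X *v v) * norm v1" using onorm[OF bl] .
  also have "norm v1 \<le> norm v"
  proof -
    have "orthogonal v1 (v - v1)" using v1 by (simp add: orthogonal_def inner_commute)
    then have "(norm v)^2 = (norm v1)^2 + (norm (v - v1))^2"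
      using norm_add_Pythagorean[of v1 "v - v1"] by simp
    then have "(norm v1)^2 \<le> (norm v)^2" by simp
    then show ?thesis by (rule power2_le_imp_le) simp
  qed
  then have "onorm (\<lambda>v. X *v v) * norm v1 \<le> onorm (\<lambda>v. X *v v) * norm v"
    using onorm_pos_le[OF bl] by (rule mult_left_mono) 
  finally show ?thesis using eq by simp
qed

lemma psd_sq_bound:
  fixes Y :: "real^'n^'n"
  assumes psd: "psd Y" and lam: "\<And>v. norm (Y *v v) \<le> l * norm v"
  shows "(norm (Y *v u))^2 \<le> l * (u \<bullet> (Y *v u))"
proof -
  have sym: "transpose Y = Y" using psd by (simp add: psd_def)
  let ?a = "Y *v u"
  have "((?a) \<bullet> (Y *v u))^2 \<le> (?a \<bullet> (Y *v ?a)) * (u \<bullet> (Y *v u))" by (rule psd_cs[OF psd])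
  moreover have "?a \<bullet> (Y *v ?a) \<le> l * (norm ?a)^2"
  proof -
    have "?a \<bullet> (Y *v ?a) \<le> norm ?a * norm (Y *v ?a)" by (rule norm_cauchy_schwarz)
    also have "\<dots> \<le> norm ?a * (l * norm ?a)" using lam by (simp add: mult_left_mono)
    finally show ?thesis by (simp add: power2_eq_square mult_ac)
  qed
  moreover have u0: "u \<bullet> (Y *v u) \<ge> 0" using psd by (simp add: psd_def)
  ultimately have "((norm ?a)^2)^2 \<le> l * (norm ?a)^2 * (u \<bullet> (Y *v u))"
  proof -
    assume h1: "((?a) \<bullet> (Y *v u))^2 \<le> (?a \<bullet> (Y *v ?a)) * (u \<bullet> (Y *v u))"
      and h2: "?a \<bullet> (Y *v ?a) \<le> l * (norm ?a)^2" and h3: "u \<bullet> (Y *v u) \<ge> 0"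
    have "(?a \<bullet> (Y *v ?a)) * (u \<bullet> (Y *v u)) \<le> l * (norm ?a)^2 * (u \<bullet> (Y *v u))"
      using h2 h3 by (rule mult_right_mono)
    moreover have "((?a) \<bullet> (Y *v u)) = (norm ?a)^2" by (simp add: power2_norm_eq_inner)
    ultimately show ?thesis using h1 by simp
  qed
  then have "(norm ?a)^2 * (norm ?a)^2 \<le> (norm ?a)^2 * (l * (u \<bullet> (Y *v u)))"
    by (simp add: power2_eq_square mult_ac)
  then show ?thesis
    by (cases "norm ?a = 0") (auto simp: mult_le_cancel_left power2_eq_square mult_ac u0)
qed

lemma mat_eq_zero: "(\<forall>v. (S::real^'n^'m) *v v = 0) \<Longrightarrow> S = 0"
proof -
  assume h: "\<forall>v. S *v v = 0"
  have "S $ i $ j = 0" for i j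
  proof -
    have "(S *v axis j 1) $ i = S $ i $ j" by (simp add: matrix_vector_mult_basis column_def)
    then show ?thesis using h by simp
  qed
  then show ?thesis by (simp add: vec_eq_iff)
qed

lemma psd_kernel_min:
  fixes S :: "real^'n^'n"
  assumes psd: "psd S" and Sn: "S \<noteq> 0"
  defines "N \<equiv> {v. S *v v = 0}"
  shows "min_nonzero_eig S > 0"
    and "\<And>v. min_nonzero_eig S * (norm (v - closest_point N v))^2 \<le> v \<bullet> (S *v v)"
proof -
  have sym: "transpose S = S" using psd by (simp add: psd_def)
  have Nsub: "subspace N" unfolding N_def by (intro subspace_ker) simp
  define U where "U = orthogonal_comp N"
  have Usub: "subspace U" unfolding U_def by (rule subspace_orthogonal_comp)
  define Q where "Q v = v - closest_point N v" for v
  have PN: "closest_point N v \<in> N" for v using proj_subspace[OF Nsub] by blast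
  have QU: "Q v \<in> U" for v
    using proj_subspace[OF Nsub] by (auto simp: Q_def U_def orthogonal_comp_def orthogonal_def inner_commute)
  have rangeU: "S *v a \<in> U" for a
  proof -
    have "y \<bullet> (S *v a) = 0" if "y \<in> N" for y
      using sym_dot[OF sym, of y a] that by (simp add: N_def inner_commute)
    then show ?thesis by (auto simp: U_def orthogonal_comp_def orthogonal_def)
  qed
  have SQ: "S *v v = S *v Q v" for v
    using PN[of v] by (simp add: Q_def N_def matrix_vector_mult_diff_distrib)
  have qred: "v \<bullet> (S *v v) = Q v \<bullet> (S *v Q v)" for v
  proof -
    have "v = closest_point N v + Q v" by (simp add: Q_def)
    then have "v \<bullet> (S *v Q v) = closest_point N v \<bullet> (S *v Q v) + Q v \<bullet> (S *v Q v)"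
      by (metis inner_add_left)
    moreover have "closest_point N v \<bullet> (S *v Q v) = 0"
      using sym_dot[OF sym, of "closest_point N v" "Q v"] PN[of v] by (simp add: N_def)
    ultimately show ?thesis using SQ[of v] by simp
  qed
  obtain v where "S *v v \<noteq> 0" using Sn mat_eq_zero by blast
  then have Qn: "Q v \<noteq> 0" using SQ[of v] by auto
  let ?C = "U \<inter> sphere 0 1"
  have cC: "compact ?C" using closed_subspace[OF Usub] by (intro closed_Int_compact) auto
  have "Q v /\<^sub>R norm (Q v) \<in> ?C" using Qn QU[of v] Usub by (auto simp: subspace_scale)
  then have Cne: "?C \<noteq> {}" by blast
  have cont: "continuous_on ?C (\<lambda>v. v \<bullet> (S *v v))"
    by (intro continuous_intros linear_continuous_on) (simp add: linear_conv_bounded_linear)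
  obtain v0 where v0: "v0 \<in> ?C" and mn: "\<forall>y\<in>?C. v0 \<bullet> (S *v v0) \<le> y \<bullet> (S *v y)"
    using continuous_attains_inf[OF cC Cne cont] by blast
  define \<mu> where "\<mu> = v0 \<bullet> (S *v v0)"
  have v0U: "v0 \<in> U" and v01: "norm v0 = 1" using v0 by auto
  have A: "\<mu> * (norm u)^2 \<le> u \<bullet> (S *v u)" if uU: "u \<in> U" for u
  proof (cases "u = 0")
    case True then show ?thesis by simp
  next
    case False
    have "u /\<^sub>R norm u \<in> ?C" using False uU Usub by (auto simp: subspace_scale)
    then have "\<mu> \<le> (u /\<^sub>R norm u) \<bullet> (S *v (u /\<^sub>R norm u))" using mn unfolding \<mu>_def by blast
    also have "\<dots> = (u \<bullet> (S *v u)) / (norm u)^2"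
      by (simp add: matrix_vector_mult_scaleR power2_eq_square divide_inverse_commute)
    finally show ?thesis using False by (simp add: field_simps)
  qed
  have mu0: "\<mu> \<ge> 0" using psd by (simp add: psd_def \<mu>_def)
  have mup: "\<mu> > 0"
  proof (rule ccontr)
    assume "\<not> \<mu> > 0"
    then have "\<mu> = 0" using mu0 by simp
    then have "S *v v0 = 0" using psd_null[OF psd] by (simp add: \<mu>_def)
    then have "v0 \<in> N" by (simp add: N_def)
    then have "v0 \<bullet> v0 = 0" using v0U by (auto simp: U_def orthogonal_comp_def orthogonal_def)
    then show False using v01 by simp
  qed
  have eig: "S *v v0 = \<mu> *\<^sub>R v0"
  proof -
    define h where "h = S *v v0 - \<mu> *\<^sub>R v0"
    have hU: "h \<in> U" unfolding h_def using rangeU v0U Usub by (auto intro: subspace_diff subspace_scale)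
    have "\<forall>t. 0 \<le> (2 * (h \<bullet> h)) * t + (h \<bullet> (S *v h) - \<mu> * (h \<bullet> h)) * t^2"
    proof
      fix t
      have "v0 + t *\<^sub>R h \<in> U" using v0U hU Usub by (auto intro: subspace_add subspace_scale)
      then have "\<mu> * (norm (v0 + t *\<^sub>R h))^2 \<le> (v0 + t *\<^sub>R h) \<bullet> (S *v (v0 + t *\<^sub>R h))" by (rule A)
      moreover have "(norm (v0 + t *\<^sub>R h))^2 = 1 + 2 * t * (h \<bullet> v0) + t^2 * (h \<bullet> h)"
      proof -
        have vv: "v0 \<bullet> v0 = 1" using v01 by (simp add: norm_eq_1)
        have "(norm (v0 + t *\<^sub>R h))^2 = (v0 + t *\<^sub>R h) \<bullet> (v0 + t *\<^sub>R h)" by (rule power2_norm_eq_inner)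
        also have "\<dots> = v0 \<bullet> v0 + 2 * t * (h \<bullet> v0) + t^2 * (h \<bullet> h)"
          by (simp add: inner_add_left inner_add_right inner_commute power2_eq_square algebra_simps)
        finally show ?thesis using vv by simp
      qed
      moreover have "(v0 + t *\<^sub>R h) \<bullet> (S *v (v0 + t *\<^sub>R h)) = \<mu> + 2 * t * (h \<bullet> (S *v v0)) + t^2 * (h \<bullet> (S *v h))"
        using quad_expand[OF sym, of v0 t h] by (simp add: \<mu>_def)
      moreover have "h \<bullet> (S *v v0) = h \<bullet> h + \<mu> * (h \<bullet> v0)"
        by (simp add: h_def inner_diff_right inner_diff_left inner_commute algebra_simps)
      ultimately show "0 \<le> (2 * (h \<bullet> h)) * t + (h \<bullet> (S *v h) - \<mu> * (h \<bullet> h)) * t^2"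
        by (simp add: algebra_simps)
    qed
    then have "2 * (h \<bullet> h) = 0" by (rule quad_zero)
    then show ?thesis by (simp add: h_def)
  qed
  have mne: "min_nonzero_eig S = \<mu>"
    unfolding min_nonzero_eig_def
  proof (rule cInf_eq_minimum)
    show "\<mu> \<in> {l. l \<noteq> 0 \<and> (\<exists>v. v \<noteq> 0 \<and> S *v v = l *\<^sub>R v)}"
      using mup eig v01 by (auto intro!: exI[of _ v0])
    fix l assume "l \<in> {l. l \<noteq> 0 \<and> (\<exists>v. v \<noteq> 0 \<and> S *v v = l *\<^sub>R v)}"
    then obtain u where l: "l \<noteq> 0" "u \<noteq> 0" "S *v u = l *\<^sub>R u" by blast
    have "u = (1 / l) *\<^sub>R (S *v u)" using l by simp
    then have "u \<in> U" using rangeU[of u] Usub by (metis subspace_scale)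
    then have "\<mu> * (norm u)^2 \<le> u \<bullet> (S *v u)" by (rule A)
    also have "\<dots> = l * (norm u)^2" using l by (simp add: power2_norm_eq_inner)
    finally show "\<mu> \<le> l" using l by simp
  qed
  show "min_nonzero_eig S > 0" using mne mup by simp
  fix w
  have "\<mu> * (norm (Q w))^2 \<le> Q w \<bullet> (S *v Q w)" using A[OF QU[of w]] .
  then show "min_nonzero_eig S * (norm (w - closest_point N w))^2 \<le> w \<bullet> (S *v w)"
    using mne qred[of w] by (simp add: Q_def)
qed

lemma inner_sum_outer:
  "(\<Sum>k<m. outer (a k) (a k)) \<bullet> (\<Sum>l<m. outer (b l) (b l)) = (\<Sum>k<m. \<Sum>l<m. (a k \<bullet> b l)^2)"
  by (simp add: inner_sum_left inner_sum_right outer_outer power2_eq_square) (rule sum.swap)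

lemma normsq_sum:
  fixes w :: "nat \<Rightarrow> 'a::real_inner"
  shows "(norm (\<Sum>k<m. c k *\<^sub>R w k))^2 = (\<Sum>k<m. \<Sum>l<m. c k * c l * (w k \<bullet> w l))"
  unfolding power2_norm_eq_inner inner_sum_left by (simp add: inner_sum_right mult_ac)

lemma norm_sq_components: "(norm (x::real^'n))^2 = (\<Sum>j\<in>UNIV. (x $ j)^2)"
  unfolding power2_norm_eq_inner by (simp add: inner_vec_def power2_eq_square)

lemma psd_face_bound:
  fixes S Y :: "real^'n^'n" and m :: nat
  assumes psd: "psd S" and Sn: "S \<noteq> 0" and Yd: "Y = (\<Sum>k<m. outer (w k) (w k))"
    and lam: "\<And>u. (norm (Y *v u))^2 \<le> l * (u \<bullet> (Y *v u))" and l0: "l \<ge> 0"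
  shows "\<exists>Z. psd Z \<and> S \<bullet> Z = 0 \<and> norm (Y - Z) \<le> sqrt (2 * ((S \<bullet> Y) / min_nonzero_eig S) * l)"
proof -
  define N where "N = {v. S *v v = 0}"
  have Nsub: "subspace N" unfolding N_def by (intro subspace_ker) simp
  define P where "P v = closest_point N v" for v
  define Q where "Q v = v - P v" for v
  have PN: "P v \<in> N" for v using proj_subspace[OF Nsub] by (simp add: P_def)
  have QN: "Q v \<bullet> n = 0" if "n \<in> N" for v n using proj_subspace[OF Nsub] that by (simp add: Q_def P_def)
  have cross: "P a \<bullet> Q b = 0" for a b using QN[OF PN[of a], of b] by (simp add: inner_commute)
  have decv: "v = P v + Q v" for v by (simp add: Q_def)
  have selfadj: "Q a \<bullet> b = a \<bullet> Q b" for a b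
  proof -
    have "Q a \<bullet> b = Q a \<bullet> (P b + Q b)" using decv[of b] by simp
    also have "\<dots> = Q a \<bullet> Q b" using cross[of b a] by (simp add: inner_add_right inner_commute)
    also have "\<dots> = (P a + Q a) \<bullet> Q b" using cross[of a b] by (simp add: inner_add_left)
    finally show ?thesis using decv[of a] by simp
  qed
  have wP: "v \<bullet> P u = P v \<bullet> P u" for v u
  proof -
    have "v \<bullet> P u = (P v + Q v) \<bullet> P u" using decv[of v] by simp
    also have "\<dots> = P v \<bullet> P u + Q v \<bullet> P u" by (rule inner_add_left)
    also have "Q v \<bullet> P u = 0" using cross[of u v] by (simp add: inner_commute)
    finally show ?thesis by simp
  qed
  have ww: "v \<bullet> u = P v \<bullet> P u + Q v \<bullet> Q u" for v u
  proof -
    have "v \<bullet> u = (P v + Q v) \<bullet> (P u + Q u)" using decv[of v] decv[of u] by simp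
    also have "\<dots> = P v \<bullet> P u + Q v \<bullet> Q u"
      using cross[of v u] cross[of u v] by (simp add: inner_add_left inner_add_right inner_commute)
    finally show ?thesis .
  qed
  define Z where "Z = (\<Sum>k<m. outer (P (w k)) (P (w k)))"
  have psdZ: "psd Z" unfolding Z_def by (rule psd_sum_outer)
  have SZ: "S \<bullet> Z = 0"
    unfolding Z_def using PN by (simp add: inner_sum_right inner_outer N_def)
  define \<mu> where "\<mu> = min_nonzero_eig S"
  have mup: "\<mu> > 0" using psd_kernel_min(1)[OF psd Sn] by (simp add: \<mu>_def)
  have muQ: "\<mu> * (norm (Q v))^2 \<le> v \<bullet> (S *v v)" for v
    using psd_kernel_min(2)[OF psd Sn, of v] by (simp add: \<mu>_def Q_def P_def N_def)
  define q where "q = (\<Sum>k<m. (norm (Q (w k)))^2)"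
  have eps: "\<mu> * q \<le> S \<bullet> Y"
  proof -
    have "S \<bullet> Y = (\<Sum>k<m. w k \<bullet> (S *v w k))" by (simp add: Yd inner_sum_right inner_outer)
    moreover have "\<mu> * q = (\<Sum>k<m. \<mu> * (norm (Q (w k)))^2)" by (simp add: q_def sum_distrib_left)
    ultimately show ?thesis using muQ by (simp add: sum_mono)
  qed
  have nYZ: "(norm (Y - Z))^2 = (\<Sum>k<m. \<Sum>l<m. (w k \<bullet> w l)^2 - (P (w k) \<bullet> P (w l))^2)"
  proof -
    have "(norm (Y - Z))^2 = Y \<bullet> Y - 2 * (Y \<bullet> Z) + Z \<bullet> Z"
      by (simp add: power2_norm_eq_inner inner_diff_left inner_diff_right inner_commute)
    also have "Y \<bullet> Y = (\<Sum>k<m. \<Sum>l<m. (w k \<bullet> w l)^2)" unfolding Yd by (rule inner_sum_outer)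
    also have "Y \<bullet> Z = (\<Sum>k<m. \<Sum>l<m. (P (w k) \<bullet> P (w l))^2)"
    proof -
      have wP': "\<forall>k l. w k \<bullet> P (w l) = P (w k) \<bullet> P (w l)" using wP by blast
      show ?thesis unfolding Yd Z_def inner_sum_outer using wP' by simp
    qed
    also have "Z \<bullet> Z = (\<Sum>k<m. \<Sum>l<m. (P (w k) \<bullet> P (w l))^2)" unfolding Z_def by (rule inner_sum_outer)
    finally show ?thesis by (simp add: sum_subtractf)
  qed
  define TT where "TT = (\<Sum>k<m. \<Sum>l<m. (w k \<bullet> w l) * (Q (w k) \<bullet> Q (w l)))"
  have le1: "(norm (Y - Z))^2 \<le> 2 * TT"
  proof -
    have "(w k \<bullet> w l)^2 - (P (w k) \<bullet> P (w l))^2 \<le> 2 * ((w k \<bullet> w l) * (Q (w k) \<bullet> Q (w l)))" for k l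
    proof -
      have "(w k \<bullet> w l)^2 - (P (w k) \<bullet> P (w l))^2
            = 2 * ((w k \<bullet> w l) * (Q (w k) \<bullet> Q (w l))) - (Q (w k) \<bullet> Q (w l))^2"
        using ww[of "w k" "w l"] by (simp add: power2_eq_square algebra_simps)
      then show ?thesis by simp
    qed
    then show ?thesis unfolding nYZ TT_def
      by (simp add: sum_distrib_left sum_mono)
  qed
  define u where "u j = Q (axis j 1)" for j :: 'n
  have Qcomp: "Q v $ j = v \<bullet> u j" for v j
    using selfadj[of v "axis j 1"] by (simp add: u_def inner_axis)
  have Yu: "Y *v x = (\<Sum>k<m. (w k \<bullet> x) *\<^sub>R w k)" for x by (simp add: Yd sum_outer_mult)
  have TT_eq: "TT = (\<Sum>j\<in>UNIV. (norm (Y *v u j))^2)"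
  proof -
    have "TT = (\<Sum>k<m. \<Sum>l<m. \<Sum>j\<in>UNIV. (w k \<bullet> u j) * (w l \<bullet> u j) * (w k \<bullet> w l))"
      unfolding TT_def by (simp add: inner_vec_def Qcomp sum_distrib_left mult_ac)
    also have "\<dots> = (\<Sum>k<m. \<Sum>j\<in>UNIV. \<Sum>l<m. (w k \<bullet> u j) * (w l \<bullet> u j) * (w k \<bullet> w l))"
      by (rule sum.cong[OF refl]) (rule sum.swap)
    also have "\<dots> = (\<Sum>j\<in>UNIV. \<Sum>k<m. \<Sum>l<m. (w k \<bullet> u j) * (w l \<bullet> u j) * (w k \<bullet> w l))"
      by (rule sum.swap)
    also have "\<dots> = (\<Sum>j\<in>UNIV. (norm (Y *v u j))^2)"
    proof (rule sum.cong[OF refl])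
      fix j
      show "(\<Sum>k<m. \<Sum>l<m. (w k \<bullet> u j) * (w l \<bullet> u j) * (w k \<bullet> w l)) = (norm (Y *v u j))^2"
        using normsq_sum[of "\<lambda>k. w k \<bullet> u j" w m] by (simp add: Yu)
    qed
    finally show ?thesis .
  qed
  have TT_le: "TT \<le> l * q"
  proof -
    have "TT \<le> (\<Sum>j\<in>UNIV. l * (u j \<bullet> (Y *v u j)))" unfolding TT_eq by (intro sum_mono lam)
    also have "\<dots> = l * (\<Sum>j\<in>UNIV. \<Sum>k<m. (w k \<bullet> u j)^2)"
      by (simp add: Yu inner_sum_right sum_distrib_left power2_eq_square inner_commute)
    also have "(\<Sum>j\<in>UNIV. \<Sum>k<m. (w k \<bullet> u j)^2) = (\<Sum>k<m. \<Sum>j\<in>UNIV. (w k \<bullet> u j)^2)"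
      by (rule sum.swap)
    also have "\<dots> = q"
      by (simp add: q_def norm_sq_components Qcomp)
    finally show ?thesis .
  qed
  have "(norm (Y - Z))^2 \<le> 2 * l * q" using le1 TT_le by simp
  also have "2 * l * q \<le> 2 * ((S \<bullet> Y) / \<mu>) * l"
  proof -
    have "q \<le> (S \<bullet> Y) / \<mu>" using eps mup by (simp add: field_simps mult.commute)
    then have "(2 * l) * q \<le> (2 * l) * ((S \<bullet> Y) / \<mu>)" using l0 by (intro mult_left_mono) auto
    then show ?thesis by (simp add: mult_ac)
  qed
  finally have "norm (Y - Z) \<le> sqrt (2 * ((S \<bullet> Y) / \<mu>) * l)" by (simp add: real_le_rsqrt)
  then show ?thesis using psdZ SZ by (auto simp: \<mu>_def)
qed

context conic_setup begin

lemma FB_psd: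
  fixes T :: "'e \<Rightarrow> real^'n^'n"
  assumes "case_psd K s f T" shows "infdist (pos_part K x) FF \<le> f x"
proof -
  have iso: "isometric_onto T {M. transpose M = M}" and Kd: "K = T -` {M. psd M}"
    and sn: "s \<noteq> 0"
    and fd: "f = (\<lambda>x. (s \<bullet> pos_part K x) / min_nonzero_eig (T s)
              + sqrt (2 * ((s \<bullet> pos_part K x) / min_nonzero_eig (T s)) * onorm (\<lambda>v. T x *v v)))"
    using assms by (auto simp: case_psd_def)
  note I = iso_props[OF iso]
  have surj: "\<exists>z. T z = M" if "transpose M = M" for M
  proof -
    have "M \<in> range T" using I(3) that by simp
    then obtain z where "M = T z" by blast
    then show ?thesis by blast
  qed
  have inK: "z \<in> K \<longleftrightarrow> psd (T z)" for z using Kd by simp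
  define S where "S = T s"
  have psdS: "psd S"
    unfolding psd_def
  proof
    show "transpose S = S" using I(3) by (auto simp: S_def)
    show "\<forall>v. 0 \<le> v \<bullet> (S *v v)"
    proof
      fix v
      obtain k where k: "T k = outer v v" using surj transpose_outer by blast
      have "k \<in> K" using inK k psd_outer by simp
      then have "0 \<le> s \<bullet> k" by (rule s_nonneg)
      also have "s \<bullet> k = S \<bullet> outer v v" using I(2)[of s k] k by (simp add: S_def)
      also have "\<dots> = v \<bullet> (S *v v)" by (rule inner_outer)
      finally show "0 \<le> v \<bullet> (S *v v)" .
    qed
  qed
  have Sn: "S \<noteq> 0" using I(4)[of s] sn by (auto simp: S_def)
  let ?y = "pos_part K x"
  define Y where "Y = T ?y"
  define X where "X = T x"
  have psdY: "psd Y" using inK pos_in_K by (simp add: Y_def)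
  have symX: "transpose X = X" using I(3) by (auto simp: X_def)
  have symY: "transpose Y = Y" using psdY by (simp add: psd_def)
  define H where "H = Y - X"
  have Txy: "T (x - ?y) = - H" using I(1) by (simp add: H_def X_def Y_def linear_diff)
  have mo: "(x - ?y) \<bullet> ?y = 0" "\<forall>k\<in>K. (x - ?y) \<bullet> k \<le> 0"
    using moreau(2,3)[OF K_props(3) K_props(2) K_props(1) K_props(4), of x] by (auto simp: pos_part_def)
  have HY: "H \<bullet> Y = 0" using mo(1) I(2)[of "x - ?y" ?y] Txy by (simp add: Y_def)
  have HM: "0 \<le> H \<bullet> M" if pM: "psd M" for M
  proof -
    have "transpose M = M" using pM by (simp add: psd_def)
    then obtain k where k: "T k = M" using surj by blast
    have "k \<in> K" using inK k pM by simp
    then have "(x - ?y) \<bullet> k \<le> 0" using mo(2) by blast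
    then show ?thesis using I(2)[of "x - ?y" k] Txy k by simp
  qed
  obtain m :: nat and w where Yd: "Y = (\<Sum>k<m. outer (w k) (w k))" using psd_decomp[OF psdY] by blast
  have psdH: "psd H"
    unfolding psd_def
  proof
    show "transpose H = H" using symX symY by (simp add: H_def transpose_def vec_eq_iff)
    show "\<forall>v. 0 \<le> v \<bullet> (H *v v)"
    proof
      fix v
      have "0 \<le> H \<bullet> outer v v" by (rule HM[OF psd_outer])
      then show "0 \<le> v \<bullet> (H *v v)" by (simp add: inner_outer)
    qed
  qed
  have Hw: "H *v w k = 0" if "k < m" for k
  proof -
    have nn: "\<forall>k\<in>{..<m}. 0 \<le> w k \<bullet> (H *v w k)" using psdH by (simp add: psd_def)
    have "(\<Sum>k<m. w k \<bullet> (H *v w k)) = H \<bullet> Y" by (simp add: Yd inner_sum_right inner_outer)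
    then have "(\<Sum>k<m. w k \<bullet> (H *v w k)) = 0" using HY by simp
    moreover have "finite {..<m}" by simp
    ultimately have "\<forall>k\<in>{..<m}. w k \<bullet> (H *v w k) = 0"
      using sum_nonneg_eq_0_iff[of "{..<m}" "\<lambda>k. w k \<bullet> (H *v w k)"] nn by blast
    then have "w k \<bullet> (H *v w k) = 0" using that by simp
    then show ?thesis by (rule psd_null[OF psdH])
  qed
  define lam where "lam = onorm (\<lambda>v. X *v v)"
  have bl: "bounded_linear (\<lambda>v. X *v v)" by (simp add: linear_conv_bounded_linear)
  have lam0: "lam \<ge> 0" unfolding lam_def by (rule onorm_pos_le[OF bl])
  have L: "norm (Y *v v) \<le> lam * norm v" for v
  proof -
    have "(X - Y) *v w k = 0" if "k < m" for k
      using Hw[OF that] by (simp add: H_def matrix_vector_mult_diff_rdistrib)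
    then show ?thesis unfolding lam_def using psd_opnorm_bound[OF Yd, of X "X - Y"] by simp
  qed
  have sqb: "(norm (Y *v u))^2 \<le> lam * (u \<bullet> (Y *v u))" for u by (rule psd_sq_bound[OF psdY L])
  obtain Z where Z: "psd Z" "S \<bullet> Z = 0" "norm (Y - Z) \<le> sqrt (2 * ((S \<bullet> Y) / min_nonzero_eig S) * lam)"
    using psd_face_bound[OF psdS Sn Yd sqb lam0] by blast
  obtain z where z: "T z = Z" using surj Z(1) by (auto simp: psd_def)
  have zF: "z \<in> FF"
  proof -
    have "z \<in> K" using inK z Z(1) by simp
    moreover have "z \<bullet> s = 0" using I(2)[of z s] z Z(2) by (simp add: S_def inner_commute)
    ultimately show ?thesis by (simp add: compl_face_def)
  qed
  have SY: "S \<bullet> Y = s \<bullet> ?y" using I(2) by (simp add: S_def Y_def)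
  have "infdist ?y FF \<le> norm (?y - z)" using infdist_le[OF zF] by (simp add: dist_norm)
  also have "\<dots> = norm (Y - Z)" using I(5)[of ?y z] z by (simp add: Y_def)
  also have "\<dots> \<le> sqrt (2 * ((s \<bullet> ?y) / min_nonzero_eig S) * lam)" using Z(3) SY by simp
  also have "\<dots> \<le> f x"
  proof -
    have "(s \<bullet> ?y) / min_nonzero_eig S \<ge> 0"
      using s_nonneg[OF pos_in_K[of x]] psd_kernel_min(1)[OF psdS Sn] by simp
    then show ?thesis using fd by (simp add: S_def X_def lam_def)
  qed
  finally show ?thesis .
qed

end

theorem corollary1:
  fixes K :: "'e::euclidean_space set" and A :: "'e \<Rightarrow> 'f::euclidean_space"
    and b :: 'f and c :: 'e and xs :: 'e and ys :: 'f and s :: 'e and f :: "'e \<Rightarrow> real"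
  assumes proper: "proper_cone K"
    and lin: "linear A"
    and xs_sol: "xs \<in> primal_solutions A b c K"
    and ys_sol: "ys \<in> dual_solutions A b c K"
    and compact_sol: "compact (primal_solutions A b c K)"
    and s_def: "s = c - adjoint A ys"
    and compl: "s \<bullet> xs = 0"
    and strict_compl: "xs \<in> rel_interior (compl_face K s)"
    and cases: "case_zero K s f \<or> case_interior K s f
       \<or> (\<exists>T :: 'e \<Rightarrow> real^'n1. case_orthant K s f T)
       \<or> (\<exists>T :: 'e \<Rightarrow> (real^'n2::finite) \<times> real. case_soc K s f T)
       \<or> (\<exists>T :: 'e \<Rightarrow> real^'n3^'n3. case_psd K s f T)"
  shows "(\<exists>\<gamma> \<gamma>'. \<gamma> \<ge> 0 \<and> \<gamma>' \<ge> 0 \<and>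
           (\<forall>x. infdist x (primal_solutions A b c K)
                 \<le> (1 + \<gamma> * sigma_max A) * f x + \<gamma> * norm (A x - b)
                   + (1 + \<gamma> * sigma_max A)
                       * norm (closest_point ((compl_space K s)\<^sup>\<bottom>) (neg_part K x))
                   + \<gamma>' * norm (closest_point (compl_space K s) (neg_part K x))))
       \<and> ((\<exists>x0. primal_solutions A b c K = {x0}) \<longrightarrow>
           (\<forall>x. infdist x (primal_solutions A b c K)
                 \<le> (1 + (1 / sigma_min_on A (compl_space K s)) * sigma_max A) * f x
                   + (1 / sigma_min_on A (compl_space K s)) * norm (A x - b)
                   + (1 + (1 / sigma_min_on A (compl_space K s)) * sigma_max A)
                       * norm (closest_point ((compl_space K s)\<^sup>\<bottom>) (neg_part K x))))
       \<and> (\<forall>x. s \<bullet> pos_part K x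
              = (c \<bullet> x - primal_value A b c K) + ys \<bullet> (b - A x) - s \<bullet> neg_part K x)"
proof -
  interpret conic_setup K A b c xs ys s
    using proper lin xs_sol ys_sol compact_sol s_def compl strict_compl unfolding conic_setup_def by blast
  have FB: "infdist (pos_part K x) (compl_face K s) \<le> f x" for x
    using cases
  proof (elim disjE exE)
    assume "case_zero K s f" then show ?thesis by (rule FB_zero)
  next
    assume "case_interior K s f" then show ?thesis by (rule FB_interior)
  next
    fix T :: "'e \<Rightarrow> real^'n1" assume "case_orthant K s f T" then show ?thesis by (rule FB_orthant)
  next
    fix T :: "'e \<Rightarrow> (real^'n2) \<times> real" assume "case_soc K s f T" then show ?thesis by (rule FB_soc)
  next
    fix T :: "'e \<Rightarrow> real^'n3^'n3" assume "case_psd K s f T" then show ?thesis by (rule FB_psd)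
  qed
  show ?thesis by (rule main_from_FB[OF FB])
qed

end
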